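(* Let $0<s,t<1$ and $w\in\mathbb{C}$ with $\mathrm{Re}\,w>-\tfrac12$. Let $k_w=K_w/\|K_w\|_{\mathcal{N}}$ be the normalized reproducing kernel of the Newton space $\mathcal{N}$ at $w$, regarded as an element of $H^2(\mu)$. Then $$\langle T_{t^z}^*T_{s^z}k_w,k_w\rangle_{H^2(\mu)}=\frac{s^w t^{\overline{w}}}{(s+t-st)^{2\,\mathrm{Re}\,w+1}}.$$
   Context: Let $\Omega=\{z\in\mathbb{C}:\mathrm{Re}\,z\ge-\tfrac12\}$ and let $\mu$ be the probability measure on $\Omega$ supported on the vertical lines $\mathrm{Re}\,z=\tfrac n2$, $n=-1,0,1,2,\dots$, given by $d\mu=\sum_{n=-1}^\infty \frac{|\Gamma(\frac n2+iy+1)|^2}{2\pi (n+1)!}\,dy\,d\delta_{n/2}(x)$ (where $z=x+iy$ and $\delta_{n/2}$ is the unit point mass at $x=n/2$). For $0<a\le1$, $a^z=e^{z\ln a}$. $H^2(\mu)$ is the closed linear span of $\{a^z:0<a\le1\}$ in $L^2(\mu)$, $P_\mu$ the orthogonal projection of $L^2(\mu)$ onto $H^2(\mu)$, and for $f\in L^\infty(\mu)$, $T_f h=P_\mu(fh)$ on $H^2(\mu)$; for $0<s<1$, $T_{s^z}$ is just multiplication by $s^z$ restricted to $H^2(\mu)$. The Newton space $\mathcal{N}$ is the Hilbert space of analytic functions on $\{\mathrm{Re}\,z>-\tfrac12\}$ having the Newton polynomials $N_0=1$, $N_n(z)=(-1)^n z(z-1)\cdots(z-n+1)/n!$ as orthonormal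 basis; its reproducing kernel is $K_w(z)=\frac{\Gamma(z+\overline w+1)}{\Gamma(z+1)\Gamma(\overline w+1)}$. Each $f\in\mathcal{N}$ has nontangential boundary values a.e. on $\mathrm{Re}\,z=-\tfrac12$, and with these values $\mathcal{N}$ embeds isometrically in $L^2(\mu)$ with image exactly $H^2(\mu)$ (with $a^z\mapsto a^z$). *)

theory Defs
  imports "HOL-Analysis.Analysis"
begin

definition rpow :: "real \<Rightarrow> complex \<Rightarrow> complex" where
  "rpow a z = exp (z * of_real (ln a))"

definition newton_poly :: "nat \<Rightarrow> complex \<Rightarrow> complex" where
  "newton_poly n z = (-1) ^ n * (\<Prod>j<n. z - of_nat j) / of_nat (fact n)"

text \<open>Reproducing kernel of the Newton space (defined by the Gamma formula,
  which also gives its continuous boundary values on Re z = -1/2).\<close>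
definition newton_kernel :: "complex \<Rightarrow> complex \<Rightarrow> complex" where
  "newton_kernel w z = Gamma (z + cnj w + 1) / (Gamma (z + 1) * Gamma (cnj w + 1))"

text \<open>Norm of K_w in the Newton space: K_w = sum_n conj(N_n(w)) N_n and the N_n are
  orthonormal, so ||K_w||^2 = sum_n |N_n(w)|^2.\<close>
definition newton_kernel_norm :: "complex \<Rightarrow> real" where
  "newton_kernel_norm w = sqrt (\<Sum>n. (cmod (newton_poly n w))\<^sup>2)"

definition newton_kernel_normalized :: "complex \<Rightarrow> complex \<Rightarrow> complex" where
  "newton_kernel_normalized w z = newton_kernel w z / of_real (newton_kernel_norm w)"

text \<open>The measure mu: index m = n + 1 (m :: nat, n = m - 1 \<ge> -1); on the line
  Re z = (m-1)/2 it has density |Gamma((m-1)/2 + iy + 1)|^2 / (2 pi m!) dy.\<close>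
definition newton_mu :: "complex measure" where
  "newton_mu = distr
     (density (count_space (UNIV :: nat set) \<Otimes>\<^sub>M (lborel :: real measure))
        (\<lambda>(m, y). ennreal ((cmod (Gamma (Complex ((real m - 1) / 2) y + 1)))\<^sup>2
                             / (2 * pi * fact m))))
     borel (\<lambda>(m, y). Complex ((real m - 1) / 2) y)"

definition L2_inner :: "complex measure \<Rightarrow> (complex \<Rightarrow> complex) \<Rightarrow> (complex \<Rightarrow> complex) \<Rightarrow> complex" where
  "L2_inner M f g = (\<integral> z. f z * cnj (g z) \<partial>M)"

text \<open>Toeplitz operator with symbol s^z (0<s<1): multiplication by s^z on H^2(mu).\<close>
definition T_pow :: "real \<Rightarrow> (complex \<Rightarrow> complex) \<Rightarrow> (complex \<Rightarrow> complex)" where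
  "T_pow s f = (\<lambda>z. rpow s z * f z)"

end

theory Submission
  imports Defs "HOL-Probability.Probability"
begin


lemma hbi_eq:
  "has_bochner_integral M f x \<Longrightarrow> (\<And>y. f y = g y) \<Longrightarrow> x = z \<Longrightarrow> has_bochner_integral M g z"
  by (metis has_bochner_integral_cong)

lemma Re_pos_not_nonpos: "Re z > 0 \<Longrightarrow> (z::complex) \<notin> \<int>\<^sub>\<le>\<^sub>0"
  by (auto elim!: nonpos_Ints_cases)

lemma Gamma_nz: "Re z > 0 \<Longrightarrow> Gamma (z::complex) \<noteq> 0"
  by (intro Gamma_nonzero Re_pos_not_nonpos)

lemma G0:
  fixes p :: complex
  assumes "Re p > 0"
  shows "has_bochner_integral lborel (\<lambda>v::real. exp (p * of_real v) * of_real (exp (- exp v))) (Gamma p)"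
proof -
  define f where "f = (\<lambda>t::real. complex_of_real t powr (p - 1) / of_real (exp t))"
  have fa: "f absolutely_integrable_on {0<..}"
    unfolding f_def by (rule absolutely_integrable_Gamma_integral'[OF assms])
  have fi: "integral {0<..} f = Gamma p"
    unfolding f_def using Gamma_integral_complex'[OF assms] by (rule integral_unique)
  have rng: "exp ` (UNIV::real set) = {0<..}"
    using exp_total by (auto simp: image_iff)
  have "(\<lambda>x. \<bar>exp x\<bar> *\<^sub>R f (exp x)) absolutely_integrable_on UNIV \<and>
        integral UNIV (\<lambda>x. \<bar>exp x\<bar> *\<^sub>R f (exp x)) = Gamma p"
    by (subst has_absolute_integral_change_of_variables_real[where g=exp])
       (auto intro!: derivative_eq_intros simp: rng fa fi inj_on_def)
  moreover have eq: "(\<lambda>x. \<bar>exp x\<bar> *\<^sub>R f (exp x)) = (\<lambda>v::real. exp (p * of_real v) * of_real (exp (- exp v)))"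
  proof
    fix x :: real
    have "complex_of_real (exp x) powr (p - 1) = exp ((p - 1) * of_real x)"
      by (simp add: powr_def exp_of_real[symmetric] Ln_exp mult.commute)
    then show "\<bar>exp x\<bar> *\<^sub>R f (exp x) = exp (p * of_real x) * of_real (exp (- exp x))"
      unfolding f_def
      by (simp add: scaleR_conv_of_real exp_minus field_simps exp_diff exp_of_real)
  qed
  ultimately have A: "(\<lambda>v::real. exp (p * of_real v) * of_real (exp (- exp v))) absolutely_integrable_on UNIV"
     and B: "integral UNIV (\<lambda>v::real. exp (p * of_real v) * of_real (exp (- exp v))) = Gamma p"
    by auto
  have meas: "(\<lambda>v::real. exp (p * of_real v) * of_real (exp (- exp v))) \<in> borel_measurable lborel"
    by measurable
  from A have "integrable lebesgue (\<lambda>v::real. exp (p * of_real v) * of_real (exp (- exp v)))"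
    by (simp add: set_integrable_def)
  then have I: "integrable lborel (\<lambda>v::real. exp (p * of_real v) * of_real (exp (- exp v)))"
    using integrable_completion[OF meas] by simp
  then show ?thesis
    using B integral_lborel[OF I] by (simp add: has_bochner_integral_iff)
qed

lemma G1:
  fixes p :: complex and c :: real
  assumes "Re p > 0"
  shows "has_bochner_integral lborel (\<lambda>v::real. exp (p * of_real v) * of_real (exp (- exp (c + v))))
           (Gamma p * exp (- p * of_real c))"
proof -
  have "has_bochner_integral lborel (\<lambda>v::real. exp (p * of_real (c + 1 * v)) * of_real (exp (- exp (c + 1 * v)))) (Gamma p /\<^sub>R \<bar>1\<bar>)"
    using G0[OF assms] by (subst (asm) lborel_has_bochner_integral_real_affine_iff[where c=1 and t=c]) auto
  then have X: "has_bochner_integral lborel (\<lambda>v::real. exp (p * of_real (c + 1 * v)) * of_real (exp (- exp (c + 1 * v)))) (Gamma p)"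
    by simp
  have "has_bochner_integral lborel (\<lambda>v::real. exp (- p * of_real c) * (exp (p * of_real (c + 1 * v)) * of_real (exp (- exp (c + 1 * v))))) (exp (- p * of_real c) * Gamma p)"
    by (rule has_bochner_integral_mult_right) (rule X)
  then show ?thesis
    by (rule has_bochner_integral_cong[THEN iffD1, rotated -1])
       (auto simp: exp_add[symmetric] algebra_simps)
qed

lemma G1_real:
  fixes a c :: real
  assumes "a > 0"
  shows "has_bochner_integral lborel (\<lambda>v::real. exp (a * v) * exp (- exp (c + v))) (Gamma a * exp (- a * c))"
proof -
  have "has_bochner_integral lborel (\<lambda>v::real. Re (exp (complex_of_real a * of_real v) * of_real (exp (- exp (c + v)))))
           (Re (Gamma (complex_of_real a) * exp (- complex_of_real a * of_real c)))"
    by (rule has_bochner_integral_Re[OF G1]) (use assms in simp)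
  then show ?thesis
    by (simp add: Gamma_complex_of_real exp_of_real flip: of_real_mult of_real_minus)
qed

lemma K1:
  fixes r y :: real
  assumes r: "r > 0"
  defines "p \<equiv> Complex r y"
  shows "has_bochner_integral lborel (\<lambda>v::real. exp (p * of_real v) * of_real ((1 + exp v) powr (- 2 * r)))
           (Gamma p * Gamma (2 * of_real r - p) / Gamma (2 * of_real r))"
proof -
  define F where "F = (\<lambda>(u::real, v::real). exp (p * of_real v) * of_real (exp (2 * r * u) * exp (- exp u) * exp (- exp (u + v))))"
  have Rep: "Re p = r" by (simp add: p_def)
  have g2: "Gamma (2 * complex_of_real r) = of_real (Gamma (2 * r))"
    by (metis Gamma_complex_of_real of_real_mult of_real_numeral)
  have g2': "Gamma (complex_of_real r * 2) = of_real (Gamma (r * 2))"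
    using g2 by (simp add: mult.commute)
  have Rep2: "Re (2 * of_real r - p) > 0" using r by (simp add: p_def)
  have nF: "norm (F (u, v)) = exp (2 * r * u) * exp (- exp u) * (exp (r * v) * exp (- exp (u + v)))" for u v
    by (simp add: F_def norm_mult Rep)
  have measF[measurable]: "F \<in> borel_measurable (lborel \<Otimes>\<^sub>M lborel)"
    unfolding F_def by measurable
  have innerv: "has_bochner_integral lborel (\<lambda>v. F (u, v)) (Gamma p * Gamma (2 * of_real r - p) *
        (exp ((2 * of_real r - p) * of_real u) * of_real (exp (- exp u))) / Gamma (2 * of_real r - p))" for u
  proof -
    have "has_bochner_integral lborel (\<lambda>v::real. of_real (exp (2 * r * u) * exp (- exp u)) * (exp (p * of_real v) * of_real (exp (- exp (u + v)))))
           (of_real (exp (2 * r * u) * exp (- exp u)) * (Gamma p * exp (- p * of_real u)))" (is "has_bochner_integral _ _ ?V")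
      by (rule has_bochner_integral_mult_right, rule G1) (simp add: Rep r)
    moreover have E: "of_real (exp (2 * r * u) * exp (- exp u)) * (Gamma p * exp (- p * of_real u)) =
        Gamma p * Gamma (2 * of_real r - p) * (exp ((2 * of_real r - p) * of_real u) * of_real (exp (- exp u))) / Gamma (2 * of_real r - p)"
    proof -
      have "Gamma (2 * of_real r - p) \<noteq> 0"
        using Rep2 by (rule Gamma_nz)
      moreover have "complex_of_real (exp (2 * r * u)) * exp (- p * of_real u) = exp ((2 * of_real r - p) * of_real u)"
        by (simp add: exp_of_real[symmetric] exp_add[symmetric] algebra_simps)
      ultimately show ?thesis by (simp add: field_simps)
    qed
    ultimately show ?thesis
      by (elim hbi_eq) (simp_all add: F_def mult_ac)
  qed
  have innerv_norm: "has_bochner_integral lborel (\<lambda>v. norm (F (u, v))) (exp (2 * r * u) * exp (- exp u) * (Gamma r * exp (- r * u)))" for u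
    unfolding nF by (rule has_bochner_integral_mult_right, rule G1_real) (simp add: r)
  have outer_norm: "integrable lborel (\<lambda>u. exp (2 * r * u) * exp (- exp u) * (Gamma r * exp (- r * u)))"
  proof -
    have "has_bochner_integral lborel (\<lambda>u. Gamma r * (exp (r * u) * exp (- exp (0 + u)))) (Gamma r * (Gamma r * exp (- r * 0)))"
      by (rule has_bochner_integral_mult_right, rule G1_real) (simp add: r)
    then have "has_bochner_integral lborel (\<lambda>u. exp (2 * r * u) * exp (- exp u) * (Gamma r * exp (- r * u))) (Gamma r * (Gamma r * exp (- r * 0)))"
      by (rule hbi_eq) (auto simp: mult_exp_exp algebra_simps)
    then show ?thesis by (rule integrable.intros)
  qed
  have intF: "integrable (lborel \<Otimes>\<^sub>M lborel) F"
  proof (rule lborel_pair.Fubini_integrable[OF measF])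
    show "integrable lborel (\<lambda>x. \<integral>y. norm (F (x, y)) \<partial>lborel)"
      using outer_norm by (subst has_bochner_integral_integral_eq[OF innerv_norm]) 
    show "AE x in lborel. integrable lborel (\<lambda>y. F (x, y))"
      using innerv by (auto intro: integrable.intros)
  qed
  have intF': "integrable (lborel \<Otimes>\<^sub>M lborel) (case_prod (\<lambda>u v. F (u, v)))"
    using intF by simp
  have inneru: "has_bochner_integral lborel (\<lambda>u. F (u, v)) (exp (p * of_real v) * of_real ((1 + exp v) powr (- 2 * r)) * Gamma (2 * of_real r))" for v
  proof -
    define c where "c = ln (1 + exp v)"
    have c: "exp c = 1 + exp v" unfolding c_def by (simp add: add_pos_pos)
    have "has_bochner_integral lborel (\<lambda>u::real. exp (2 * r * u) * exp (- exp (c + u))) (Gamma (2 * r) * exp (- (2 * r) * c))"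
      by (rule G1_real) (simp add: r)
    then have "has_bochner_integral lborel (\<lambda>u::real. exp (p * of_real v) * of_real (exp (2 * r * u) * exp (- exp (c + u))))
                 (exp (p * of_real v) * of_real (Gamma (2 * r) * exp (- (2 * r) * c)))"
      by (intro has_bochner_integral_mult_right has_bochner_integral_of_real)
    moreover have "exp (- exp (c + u)) = exp (- exp u) * exp (- exp (u + v))" for u
    proof -
      have "exp (c + u) = exp u + exp (u + v)" by (simp add: exp_add c algebra_simps)
      then show ?thesis by (simp add: mult_exp_exp)
    qed
    moreover have "exp (- (2 * r) * c) = (1 + exp v) powr (- 2 * r)"
    proof -
      have "0 < 1 + exp v" by (simp add: add_pos_pos)
      then show ?thesis by (simp add: powr_def c_def)
    qed
    ultimately show ?thesis
      by (subst has_bochner_integral_cong[OF refl _ refl]) (auto simp: F_def g2' mult_ac)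
  qed
  have "(\<integral>v. (\<integral>u. F (u, v) \<partial>lborel) \<partial>lborel) = (\<integral>u. (\<integral>v. F (u, v) \<partial>lborel) \<partial>lborel)"
    using lborel_pair.Fubini_integral[OF intF'] .
  also have "\<dots> = (\<integral>u. Gamma p * Gamma (2 * of_real r - p) *
        (exp ((2 * of_real r - p) * of_real u) * of_real (exp (- exp u))) / Gamma (2 * of_real r - p) \<partial>lborel)"
    by (simp add: has_bochner_integral_integral_eq[OF innerv])
  also have "\<dots> = Gamma p * Gamma (2 * of_real r - p) * Gamma (2 * of_real r - p) / Gamma (2 * of_real r - p)"
    using has_bochner_integral_integral_eq[OF G0[OF Rep2]] by simp
  also have "\<dots> = Gamma p * Gamma (2 * of_real r - p)"
  proof -
    have "Gamma (2 * of_real r - p) \<noteq> 0"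
      using Rep2 by (rule Gamma_nz)
    then show ?thesis by simp
  qed
  finally have eq1: "(\<integral>v. exp (p * of_real v) * of_real ((1 + exp v) powr (- 2 * r)) * Gamma (2 * of_real r) \<partial>lborel) = Gamma p * Gamma (2 * of_real r - p)"
    by (simp add: has_bochner_integral_integral_eq[OF inneru])
  have int1: "integrable lborel (\<lambda>v. exp (p * of_real v) * of_real ((1 + exp v) powr (- 2 * r)) * Gamma (2 * of_real r))"
    using lborel_pair.integrable_snd[OF intF'] by (simp add: has_bochner_integral_integral_eq[OF inneru])
  have G2: "Gamma (2 * complex_of_real r) \<noteq> 0"
    using r by (intro Gamma_nz) simp
  have "has_bochner_integral lborel (\<lambda>v. exp (p * of_real v) * of_real ((1 + exp v) powr (- 2 * r)) * Gamma (2 * of_real r) / Gamma (2 * of_real r))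
          ((\<integral>v. exp (p * of_real v) * of_real ((1 + exp v) powr (- 2 * r)) * Gamma (2 * of_real r) \<partial>lborel) / Gamma (2 * of_real r))"
    by (rule has_bochner_integral_divide[OF has_bochner_integral_integrable[OF int1]])
  then show ?thesis using G2 eq1 by (elim hbi_eq) (simp_all del: integral_mult_left_zero)

qed




definition hh :: "real \<Rightarrow> real \<Rightarrow> real" where
  "hh r v = exp (r * v) * (1 + exp v) powr (- 2 * r)"

lemma onepexp[simp]: "0 < 1 + exp (x::real)" "1 + exp (x::real) \<noteq> 0"
  using add_pos_pos[OF zero_less_one exp_gt_zero[of x]] by auto

lemma hh_pos: "0 < hh r v"
  unfolding hh_def by (simp add: add_pos_pos)

lemma hh_le1:
  assumes "r > 0" shows "hh r v \<le> 1"
proof -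
  have p: "0 < 1 + exp v" by (simp add: add_pos_pos)
  have "exp (r * v) = exp v powr r" by (simp add: powr_def mult.commute)
  also have "\<dots> \<le> (1 + exp v) powr r" using assms by (intro powr_mono2) auto
  also have "\<dots> \<le> (1 + exp v) powr (2 * r)" using assms by (intro powr_mono) auto
  finally have "hh r v \<le> (1 + exp v) powr (2 * r) * (1 + exp v) powr (- 2 * r)"
    unfolding hh_def by (intro mult_right_mono) auto
  also have "\<dots> = 1" using p by (simp add: powr_add[symmetric])
  finally show ?thesis .
qed

lemma hh_cont: "isCont (hh r) x"
  unfolding hh_def by (intro continuous_intros) (auto simp: add_pos_pos)

lemma hh_meas[measurable]: "hh r \<in> borel_measurable borel"
  unfolding hh_def by measurable

lemma K1':
  fixes r y :: real
  assumes r: "r > 0"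
  shows "has_bochner_integral lborel (\<lambda>v. of_real (hh r v) * exp (\<i> * of_real (y * v)))
           (of_real ((cmod (Gamma (Complex r y)))\<^sup>2 / Gamma (2 * r)))"
proof -
  define p where "p = Complex r y"
  have e: "exp (p * of_real v) * of_real ((1 + exp v) powr (- 2 * r)) = of_real (hh r v) * exp (\<i> * of_real (y * v))" for v
  proof -
    have "p * of_real v = of_real (r * v) + \<i> * of_real (y * v)" by (simp add: complex_eq_iff p_def)
    then show ?thesis by (simp only: exp_add exp_of_real) (simp add: hh_def)
  qed
  have c: "2 * of_real r - p = cnj p" by (simp add: complex_eq_iff p_def)
  have g2: "Gamma (2 * complex_of_real r) = of_real (Gamma (2 * r))"
    by (metis Gamma_complex_of_real of_real_mult of_real_numeral)
  have v: "Gamma p * Gamma (2 * of_real r - p) / Gamma (2 * of_real r) = of_real ((cmod (Gamma p))\<^sup>2 / Gamma (2 * r))"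
    unfolding c g2 by (simp add: cnj_Gamma[symmetric] complex_norm_square[symmetric])
  show ?thesis
    using K1[OF r, of y] unfolding p_def[symmetric] by (elim hbi_eq) (rule e, rule v)
qed

lemma Ihh:
  assumes r: "r > 0"
  shows "has_bochner_integral lborel (hh r) ((cmod (Gamma (Complex r 0)))\<^sup>2 / Gamma (2 * r))"
proof -
  have "has_bochner_integral lborel (\<lambda>v. Re (of_real (hh r v) * exp (\<i> * of_real (0 * v))))
           (Re (of_real ((cmod (Gamma (Complex r 0)))\<^sup>2 / Gamma (2 * r))))"
    by (rule has_bochner_integral_Re[OF K1'[OF r]])
  then show ?thesis by simp
qed

lemma GF:
  fixes \<delta> a :: real
  assumes d: "\<delta> > 0"
  shows "has_bochner_integral lborel (\<lambda>y. of_real (exp (- (\<delta> * y)\<^sup>2 / 2)) * exp (\<i> * of_real (a * y)))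
           (of_real (sqrt (2 * pi) / \<delta> * exp (- (a / \<delta>)\<^sup>2 / 2)))"
proof -
  let ?t = "a / \<delta>"
  have intS: "integrable lborel std_normal_density"
    using integrable_std_normal_moment[of 0] by simp
  have int0: "integrable lborel (\<lambda>x. std_normal_density x *\<^sub>R iexp (?t * x))"
    by (rule Bochner_Integration.integrable_bound[where f = std_normal_density, OF intS]) auto
  have "char std_normal_distribution ?t = of_real (exp (- (?t\<^sup>2) / 2))"
    by (simp add: char_std_normal_distribution)
  then have "(\<integral>x. std_normal_density x *\<^sub>R iexp (?t * x) \<partial>lborel) = of_real (exp (- (?t\<^sup>2) / 2))"
    unfolding char_def by (subst (asm) integral_density) auto
  with int0 have H0: "has_bochner_integral lborel (\<lambda>x. std_normal_density x *\<^sub>R iexp (?t * x)) (of_real (exp (- (?t\<^sup>2) / 2)))"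
    by (simp add: has_bochner_integral_iff)
  have "has_bochner_integral lborel (\<lambda>x. std_normal_density (0 + \<delta> * x) *\<^sub>R iexp (?t * (0 + \<delta> * x))) (of_real (exp (- (?t\<^sup>2) / 2)) /\<^sub>R \<bar>\<delta>\<bar>)"
    using H0 d by (subst (asm) lborel_has_bochner_integral_real_affine_iff[where c=\<delta> and t=0]) auto
  then have "has_bochner_integral lborel (\<lambda>x. of_real (sqrt (2 * pi)) * (std_normal_density (0 + \<delta> * x) *\<^sub>R iexp (?t * (0 + \<delta> * x))))
     (of_real (sqrt (2 * pi)) * (of_real (exp (- (?t\<^sup>2) / 2)) /\<^sub>R \<bar>\<delta>\<bar>))"
    by (rule has_bochner_integral_mult_right)
  then show ?thesis
    using d by (elim hbi_eq) (simp_all add: std_normal_density_def scaleR_conv_of_real field_simps)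
qed

lemma Gint:
  assumes d: "\<delta> > 0"
  shows "integrable lborel (\<lambda>y::real. exp (- (\<delta> * y)\<^sup>2 / 2))"
proof -
  have "has_bochner_integral lborel (\<lambda>y. Re (of_real (exp (- (\<delta> * y)\<^sup>2 / 2)) * exp (\<i> * of_real (0 * y))))
           (Re (of_real (sqrt (2 * pi) / \<delta> * exp (- (0 / \<delta>)\<^sup>2 / 2))))"
    by (rule has_bochner_integral_Re[OF GF[OF d]])
  then show ?thesis by (auto intro: integrable.intros)
qed

lemma REG:
  fixes r \<delta> \<theta> :: real
  assumes r: "r > 0" and d: "\<delta> > 0"
  shows "has_bochner_integral lborel
           (\<lambda>y. of_real ((cmod (Gamma (Complex r y)))\<^sup>2 * exp (- (\<delta> * y)\<^sup>2 / 2)) * exp (\<i> * of_real (\<theta> * y)))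
           (of_real (2 * pi * Gamma (2 * r) * (\<integral>x. hh r (- \<theta> + \<delta> * x) * std_normal_density x \<partial>lborel)))"
proof -
  define G2 where "G2 = Gamma (2 * r)"
  have G2pos: "G2 > 0" unfolding G2_def using r by (intro Gamma_real_pos) simp
  define G where "G = (\<lambda>y::real. exp (- (\<delta> * y)\<^sup>2 / 2))"
  define \<phi> where "\<phi> = (\<lambda>y. (cmod (Gamma (Complex r y)))\<^sup>2)"
  define Q where "Q = (\<lambda>y v. of_real (G2 * G y * hh r v) * exp (\<i> * of_real ((v + \<theta>) * y)))"
  have measQ[measurable]: "case_prod Q \<in> borel_measurable (lborel \<Otimes>\<^sub>M lborel)"
    unfolding Q_def G_def by measurable
  have nQ: "norm (Q y v) = G2 * G y * hh r v" for y v
    using G2pos hh_pos[of r v] by (simp add: Q_def G_def norm_mult abs_mult)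
  have innerv: "has_bochner_integral lborel (\<lambda>v. Q y v) (of_real (\<phi> y * G y) * exp (\<i> * of_real (\<theta> * y)))" for y
  proof -
    have "has_bochner_integral lborel (\<lambda>v. (of_real (G2 * G y) * exp (\<i> * of_real (\<theta> * y))) * (of_real (hh r v) * exp (\<i> * of_real (y * v))))
            ((of_real (G2 * G y) * exp (\<i> * of_real (\<theta> * y))) * of_real ((cmod (Gamma (Complex r y)))\<^sup>2 / Gamma (2 * r)))"
      by (rule has_bochner_integral_mult_right, rule K1'[OF r])
    then show ?thesis
    proof (elim hbi_eq)
      fix v
      have "\<i> * complex_of_real ((v + \<theta>) * y) = \<i> * of_real (\<theta> * y) + \<i> * of_real (y * v)"
        by (simp add: algebra_simps)
      then show "of_real (G2 * G y) * exp (\<i> * of_real (\<theta> * y)) * (of_real (hh r v) * exp (\<i> * of_real (y * v))) = Q y v"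
        unfolding Q_def by (simp add: exp_add mult_ac)
    next
      show "of_real (G2 * G y) * exp (\<i> * of_real (\<theta> * y)) * of_real ((cmod (Gamma (Complex r y)))\<^sup>2 / Gamma (2 * r)) =
            of_real (\<phi> y * G y) * exp (\<i> * of_real (\<theta> * y))"
        using G2pos unfolding \<phi>_def G2_def by (simp add: field_simps)
    qed
  qed
  have innery: "has_bochner_integral lborel (\<lambda>y. Q y v)
        (of_real (G2 * hh r v * (sqrt (2 * pi) / \<delta> * exp (- ((v + \<theta>) / \<delta>)\<^sup>2 / 2))))" for v
  proof -
    have "has_bochner_integral lborel (\<lambda>y. of_real (G2 * hh r v) * (of_real (exp (- (\<delta> * y)\<^sup>2 / 2)) * exp (\<i> * of_real ((v + \<theta>) * y))))
            (of_real (G2 * hh r v) * of_real (sqrt (2 * pi) / \<delta> * exp (- ((v + \<theta>) / \<delta>)\<^sup>2 / 2)))"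
      by (rule has_bochner_integral_mult_right, rule GF[OF d])
    then show ?thesis
      by (elim hbi_eq) (simp_all add: Q_def G_def mult_ac)
  qed
  obtain Ih where Ih: "has_bochner_integral lborel (hh r) Ih" using Ihh[OF r] by blast
  have intQ: "integrable (lborel \<Otimes>\<^sub>M lborel) (case_prod Q)"
  proof (rule lborel_pair.Fubini_integrable[OF measQ])
    have "integrable lborel (\<lambda>y. G2 * G y * Ih)"
      using Gint[OF d] unfolding G_def by simp
    moreover have "(\<integral>v. norm (case_prod Q (y, v)) \<partial>lborel) = G2 * G y * Ih" for y
    proof -
      have "has_bochner_integral lborel (\<lambda>v. G2 * G y * hh r v) (G2 * G y * Ih)"
        by (rule has_bochner_integral_mult_right, rule Ih)
      then show ?thesis using Ih by (simp add: nQ has_bochner_integral_integral_eq)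
    qed
    ultimately show "integrable lborel (\<lambda>y. \<integral>v. norm (case_prod Q (y, v)) \<partial>lborel)" by simp
    show "AE y in lborel. integrable lborel (\<lambda>v. case_prod Q (y, v))"
      using innerv by (auto intro: integrable.intros)
  qed
  have F: "(\<integral>v. (\<integral>y. Q y v \<partial>lborel) \<partial>lborel) = (\<integral>y. (\<integral>v. Q y v \<partial>lborel) \<partial>lborel)"
    by (rule lborel_pair.Fubini_integral[OF intQ])
  have iy: "integrable lborel (\<lambda>y. \<integral>v. Q y v \<partial>lborel)"
    by (rule lborel_pair.integrable_fst[OF intQ])
  have eqy: "(\<integral>v. Q y v \<partial>lborel) = of_real (\<phi> y * G y) * exp (\<i> * of_real (\<theta> * y))" for y
    using innerv[of y] by (simp add: has_bochner_integral_integral_eq)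
  define W where "W = (\<lambda>v. G2 * hh r v * (sqrt (2 * pi) / \<delta> * exp (- ((v + \<theta>) / \<delta>)\<^sup>2 / 2)))"
  have eqv: "(\<integral>y. Q y v \<partial>lborel) = of_real (W v)" for v
    using innery[of v] by (simp add: has_bochner_integral_integral_eq W_def)
  have "(\<integral>x. W x \<partial>lborel) = \<bar>\<delta>\<bar> *\<^sub>R (\<integral>x. W (- \<theta> + \<delta> * x) \<partial>lborel)"
    using d by (intro lborel_integral_real_affine) simp
  also have "\<dots> = (\<integral>x. 2 * pi * G2 * (hh r (- \<theta> + \<delta> * x) * std_normal_density x) \<partial>lborel)"
  proof -
    have "\<delta> * W (- \<theta> + \<delta> * x) = 2 * pi * G2 * (hh r (- \<theta> + \<delta> * x) * std_normal_density x)" for x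
    proof -
      have s: "sqrt (2 * pi) * sqrt (2 * pi) = 2 * pi" by simp
      show ?thesis using d unfolding W_def std_normal_density_def
        by (simp add: field_simps s)
    qed
    then show ?thesis using d by (simp flip: integral_mult_right_zero)
  qed
  also have "\<dots> = 2 * pi * G2 * (\<integral>x. hh r (- \<theta> + \<delta> * x) * std_normal_density x \<partial>lborel)"
    by simp
  finally have IW: "(\<integral>x. W x \<partial>lborel) = 2 * pi * G2 * (\<integral>x. hh r (- \<theta> + \<delta> * x) * std_normal_density x \<partial>lborel)" .
  have "(\<integral>y. of_real (\<phi> y * G y) * exp (\<i> * of_real (\<theta> * y)) \<partial>lborel) = (\<integral>y. (\<integral>v. Q y v \<partial>lborel) \<partial>lborel)"
    by (simp add: eqy)
  also have "\<dots> = (\<integral>v. of_real (W v) \<partial>lborel)"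
    by (simp add: F[symmetric] eqv)
  also have "\<dots> = of_real (2 * pi * G2 * (\<integral>x. hh r (- \<theta> + \<delta> * x) * std_normal_density x \<partial>lborel))"
    by (simp add: IW)
  finally have val: "(\<integral>y. of_real (\<phi> y * G y) * exp (\<i> * of_real (\<theta> * y)) \<partial>lborel) =
     of_real (2 * pi * G2 * (\<integral>x. hh r (- \<theta> + \<delta> * x) * std_normal_density x \<partial>lborel))" .
  have int: "integrable lborel (\<lambda>y. of_real (\<phi> y * G y) * exp (\<i> * of_real (\<theta> * y)))"
    using iy by (simp add: eqy)
  show ?thesis
    using int val unfolding \<phi>_def G_def G2_def by (simp add: has_bochner_integral_iff)
qed

lemma phi_cont:
  assumes r: "r > 0"
  shows "continuous_on UNIV (\<lambda>y. (cmod (Gamma (Complex r y)))\<^sup>2)"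
proof -
  have e: "(\<lambda>y. Complex r y) = (\<lambda>y. of_real r + \<i> * of_real y)"
    by (auto simp: complex_eq_iff)
  have "continuous_on UNIV (\<lambda>y. Complex r y)" unfolding e by (intro continuous_intros)
  moreover have "continuous_on ((\<lambda>y. Complex r y) ` UNIV) Gamma"
    using r by (intro continuous_on_Gamma) (force simp: complex_eq_iff elim!: nonpos_Ints_cases)
  ultimately have "continuous_on UNIV (Gamma \<circ> (\<lambda>y. Complex r y))"
    by (rule continuous_on_compose)
  then have "continuous_on UNIV (\<lambda>y. Gamma (Complex r y))" by (simp add: o_def)
  then show ?thesis by (intro continuous_intros)
qed

lemma phi_meas[measurable]:
  assumes r: "r > 0"
  shows "(\<lambda>y. (cmod (Gamma (Complex r y)))\<^sup>2) \<in> borel_measurable borel"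
  using phi_cont[OF r] by (rule borel_measurable_continuous_onI)

lemma std_int1: "(\<integral>x. std_normal_density x \<partial>lborel) = 1"
  using integral_std_normal_moment_even[of 0] by simp

lemma LIMhh:
  assumes r: "r > 0"
  shows "(\<lambda>n. \<integral>x. hh r (- \<theta> + inverse (real (Suc n)) * x) * std_normal_density x \<partial>lborel) \<longlonglongrightarrow> hh r (- \<theta>)"
proof -
  have intS: "integrable lborel std_normal_density"
    using integrable_std_normal_moment[of 0] by simp
  have "(\<lambda>n. \<integral>x. hh r (- \<theta> + inverse (real (Suc n)) * x) * std_normal_density x \<partial>lborel) \<longlonglongrightarrow>
        (\<integral>x. hh r (- \<theta>) * std_normal_density x \<partial>lborel)"
  proof (rule integral_dominated_convergence[where w = std_normal_density])
    show "AE x in lborel. (\<lambda>n. hh r (- \<theta> + inverse (real (Suc n)) * x) * std_normal_density x) \<longlonglongrightarrow> hh r (- \<theta>) * std_normal_density x"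
    proof (intro AE_I2 tendsto_mult_right)
      fix x :: real
      have "(\<lambda>n. - \<theta> + inverse (real (Suc n)) * x) \<longlonglongrightarrow> - \<theta> + 0 * x"
        by (intro tendsto_intros LIMSEQ_inverse_real_of_nat)
      then show "(\<lambda>n. hh r (- \<theta> + inverse (real (Suc n)) * x)) \<longlonglongrightarrow> hh r (- \<theta>)"
        using isCont_tendsto_compose[OF hh_cont] by fastforce
    qed
    show "AE x in lborel. norm (hh r (- \<theta> + inverse (real (Suc n)) * x) * std_normal_density x) \<le> std_normal_density x" for n
    proof (intro AE_I2)
      fix x
      have "hh r (- \<theta> + inverse (real (Suc n)) * x) * std_normal_density x \<le> 1 * std_normal_density x"
        using hh_le1[OF r] by (intro mult_right_mono) auto
      then show "norm (hh r (- \<theta> + inverse (real (Suc n)) * x) * std_normal_density x) \<le> std_normal_density x"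
        by (simp add: abs_mult abs_of_pos[OF hh_pos])
    qed
  qed (auto simp: intS)
  then show ?thesis by (simp add: std_int1)
qed

lemma FOU:
  fixes r \<theta> :: real
  assumes r: "r > 0"
  shows "integrable lborel (\<lambda>y. (cmod (Gamma (Complex r y)))\<^sup>2)"
    and "has_bochner_integral lborel (\<lambda>y. of_real ((cmod (Gamma (Complex r y)))\<^sup>2) * exp (\<i> * of_real (\<theta> * y)))
            (of_real (2 * pi * Gamma (2 * r) * hh r (- \<theta>)))"
proof -
  define \<phi> where "\<phi> = (\<lambda>y. (cmod (Gamma (Complex r y)))\<^sup>2)"
  define d where "d = (\<lambda>n. inverse (real (Suc n)))"
  have dpos: "d n > 0" for n by (simp add: d_def)
  define G where "G = (\<lambda>n y. exp (- (d n * y)\<^sup>2 / 2))"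
  have Gle: "G n y \<le> 1" for n y by (simp add: G_def)
  have Glim: "(\<lambda>n. G n y) \<longlonglongrightarrow> 1" for y
  proof -
    have "(\<lambda>n. exp (- (d n * y)\<^sup>2 / 2)) \<longlonglongrightarrow> exp (- (0 * y)\<^sup>2 / 2)"
      unfolding d_def by (intro tendsto_intros LIMSEQ_inverse_real_of_nat) auto
    then show ?thesis by (simp add: G_def)
  qed
  have REGd: "has_bochner_integral lborel (\<lambda>y. of_real (\<phi> y * G n y) * exp (\<i> * of_real (\<theta>' * y)))
           (of_real (2 * pi * Gamma (2 * r) * (\<integral>x. hh r (- \<theta>' + d n * x) * std_normal_density x \<partial>lborel)))" for n \<theta>'
    using REG[OF r dpos[of n], of \<theta>'] unfolding \<phi>_def G_def .
  have LIMd: "(\<lambda>n. 2 * pi * Gamma (2 * r) * (\<integral>x. hh r (- \<theta>' + d n * x) * std_normal_density x \<partial>lborel))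
                \<longlonglongrightarrow> 2 * pi * Gamma (2 * r) * hh r (- \<theta>')" for \<theta>'
    unfolding d_def by (intro tendsto_intros LIMhh[OF r])
  have phinn: "\<phi> y \<ge> 0" for y by (simp add: \<phi>_def)
  have REG0: "has_bochner_integral lborel (\<lambda>y. \<phi> y * G n y)
           (2 * pi * Gamma (2 * r) * (\<integral>x. hh r (- 0 + d n * x) * std_normal_density x \<partial>lborel))" for n
  proof -
    have "has_bochner_integral lborel (\<lambda>y. Re (of_real (\<phi> y * G n y) * exp (\<i> * of_real (0 * y))))
           (Re (of_real (2 * pi * Gamma (2 * r) * (\<integral>x. hh r (- 0 + d n * x) * std_normal_density x \<partial>lborel))))"
      by (rule has_bochner_integral_Re[OF REGd])
    then show ?thesis by simp
  qed
  have intphi: "integrable lborel \<phi>"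
  proof (rule integrable_monotone_convergence[where f = "\<lambda>n y. \<phi> y * G n y"])
    show "integrable lborel (\<lambda>y. \<phi> y * G n y)" for n using REG0[of n] by (rule integrable.intros)
    show "AE y in lborel. mono (\<lambda>n. \<phi> y * G n y)"
    proof (intro AE_I2 incseq_SucI)
      fix y :: real and n :: nat
      have "d (Suc n) \<le> d n" unfolding d_def by (simp add: field_simps)
      then have "(d (Suc n) * y)\<^sup>2 \<le> (d n * y)\<^sup>2"
        using dpos[of n] dpos[of "Suc n"] by (simp add: power_mult_distrib mult_right_mono power_mono)
      then have "G n y \<le> G (Suc n) y" by (simp add: G_def)
      then show "\<phi> y * G n y \<le> \<phi> y * G (Suc n) y" using phinn[of y] by (intro mult_left_mono)
    qed
    show "AE y in lborel. (\<lambda>n. \<phi> y * G n y) \<longlonglongrightarrow> \<phi> y"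
      using Glim by (auto intro!: AE_I2 tendsto_eq_intros)
    show "(\<lambda>n. integral\<^sup>L lborel (\<lambda>y. \<phi> y * G n y)) \<longlonglongrightarrow> 2 * pi * Gamma (2 * r) * hh r (- 0)"
      using LIMd[of 0] by (simp add: has_bochner_integral_integral_eq[OF REG0])
    show "\<phi> \<in> borel_measurable lborel" unfolding \<phi>_def using phi_meas[OF r] by simp
  qed
  then show "integrable lborel (\<lambda>y. (cmod (Gamma (Complex r y)))\<^sup>2)" by (simp add: \<phi>_def)
  define f where "f = (\<lambda>y. of_real (\<phi> y) * exp (\<i> * of_real (\<theta> * y)))"
  have fmeas: "f \<in> borel_measurable lborel" unfolding f_def \<phi>_def using phi_meas[OF r] by measurable
  have A: "(\<lambda>n. integral\<^sup>L lborel (\<lambda>y. of_real (\<phi> y * G n y) * exp (\<i> * of_real (\<theta> * y)))) \<longlonglongrightarrow> integral\<^sup>L lborel f"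
   and B: "integrable lborel f"
  proof -
    have s_meas: "(\<lambda>y. of_real (\<phi> y * G n y) * exp (\<i> * of_real (\<theta> * y))) \<in> borel_measurable lborel" for n
      using REGd[of n \<theta>] by (auto intro: borel_measurable_integrable integrable.intros)
    have lim: "AE y in lborel. (\<lambda>n. of_real (\<phi> y * G n y) * exp (\<i> * of_real (\<theta> * y))) \<longlonglongrightarrow> f y"
      unfolding f_def using Glim by (auto intro!: AE_I2 tendsto_eq_intros)
    have bound: "AE y in lborel. norm (of_real (\<phi> y * G n y) * exp (\<i> * of_real (\<theta> * y))) \<le> \<phi> y" for n
    proof (intro AE_I2)
      fix y
      have "\<phi> y * G n y \<le> \<phi> y * 1" using phinn[of y] Gle[of n y] by (intro mult_left_mono)
      moreover have "G n y \<ge> 0" by (simp add: G_def)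
      ultimately show "norm (of_real (\<phi> y * G n y) * exp (\<i> * of_real (\<theta> * y))) \<le> \<phi> y"
        using phinn[of y] by (simp add: norm_mult abs_mult)
    qed
    show "(\<lambda>n. integral\<^sup>L lborel (\<lambda>y. of_real (\<phi> y * G n y) * exp (\<i> * of_real (\<theta> * y)))) \<longlonglongrightarrow> integral\<^sup>L lborel f"
      by (rule integral_dominated_convergence[OF fmeas s_meas intphi lim bound])
    show "integrable lborel f"
      by (rule integrable_dominated_convergence[OF fmeas s_meas intphi lim bound])
  qed
  have "(\<lambda>n. integral\<^sup>L lborel (\<lambda>y. of_real (\<phi> y * G n y) * exp (\<i> * of_real (\<theta> * y)))) \<longlonglongrightarrow>
          of_real (2 * pi * Gamma (2 * r) * hh r (- \<theta>))"
    unfolding has_bochner_integral_integral_eq[OF REGd] by (intro tendsto_of_real LIMd)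
  with A have "integral\<^sup>L lborel f = of_real (2 * pi * Gamma (2 * r) * hh r (- \<theta>))"
    by (rule LIMSEQ_unique)
  with B show "has_bochner_integral lborel (\<lambda>y. of_real ((cmod (Gamma (Complex r y)))\<^sup>2) * exp (\<i> * of_real (\<theta> * y)))
            (of_real (2 * pi * Gamma (2 * r) * hh r (- \<theta>)))"
    unfolding f_def \<phi>_def by (simp add: has_bochner_integral_iff)
qed




definition Aw :: "complex \<Rightarrow> nat \<Rightarrow> real" where
  "Aw w n = (cmod (pochhammer (- w) n))\<^sup>2"

definition tt :: "complex \<Rightarrow> real \<Rightarrow> nat \<Rightarrow> real" where
  "tt w c n = Aw w n / (pochhammer c n * fact n)"

lemma newton_poly_poch: "newton_poly n w = pochhammer (- w) n / of_nat (fact n)"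
proof -
  have "(-1) ^ n * (\<Prod>j<n. w - of_nat j) = pochhammer (- w) n"
    by (induction n) (simp_all add: pochhammer_Suc algebra_simps)
  then show ?thesis unfolding newton_poly_def by simp
qed

lemma newton_poly_tt: "(cmod (newton_poly n w))\<^sup>2 = tt w 1 n"
  by (simp add: newton_poly_poch tt_def Aw_def norm_divide power_divide pochhammer_fact[symmetric]
                power2_eq_square)

lemma Aw_Suc: "Aw w (Suc n) = Aw w n * (cmod (of_nat n - w))\<^sup>2"
  by (simp add: Aw_def pochhammer_Suc norm_mult power_mult_distrib)

lemma Aw_nonneg: "Aw w n \<ge> 0" by (simp add: Aw_def)

lemma poch_mono_real:
  fixes a b :: real
  assumes "0 < a" "a \<le> b"
  shows "pochhammer a n \<le> pochhammer b n"
proof (induction n)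
  case (Suc n)
  have "pochhammer a n * (a + of_nat n) \<le> pochhammer b n * (b + of_nat n)"
    using Suc assms by (intro mult_mono) (auto intro: pochhammer_nonneg)
  then show ?case by (simp add: pochhammer_Suc)
qed simp

lemma tt_nonneg: "c > 0 \<Longrightarrow> tt w c n \<ge> 0"
  unfolding tt_def using pochhammer_pos[of c n] by (intro divide_nonneg_pos) (auto simp: Aw_nonneg)

lemma tt_le: "c \<ge> 1 \<Longrightarrow> tt w c n \<le> tt w 1 n"
  unfolding tt_def using poch_mono_real[of 1 c n] pochhammer_pos[of "1::real" n]
  by (intro divide_left_mono mult_right_mono) (auto simp: Aw_nonneg)

lemma tt_bound:
  assumes "Re w > - 1 / 2"
  obtains K where "K > 0" "\<And>m. m \<ge> 1 \<Longrightarrow> tt w 1 (Suc m) \<le> K * real m powr (- 2 * Re w - 2)"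
proof -
  have "convergent (rGamma_series (- w))"
    using rGamma_series_LIMSEQ by (auto simp: convergent_def)
  then have "Bseq (rGamma_series (- w))" by (rule convergent_imp_Bseq)
  then obtain K0 where K0: "K0 > 0" "\<And>n. norm (rGamma_series (- w) n) \<le> K0"
    by (auto simp: Bseq_def)
  have b: "tt w 1 (Suc m) \<le> K0\<^sup>2 * real m powr (- 2 * Re w - 2)" if m: "m \<ge> 1" for m
  proof -
    have mpos: "real m > 0" using m by simp
    have ne: "norm (exp (- w * of_real (ln (real m)))) = real m powr (- Re w)"
      using mpos by (simp add: powr_def)
    have "norm (rGamma_series (- w) m) = cmod (pochhammer (- w) (m + 1)) / (fact m * real m powr (- Re w))"
      using mpos unfolding rGamma_series_def by (simp add: norm_divide norm_mult powr_def)
    with K0(2)[of m] have "cmod (pochhammer (- w) (Suc m)) \<le> K0 * (fact m * real m powr (- Re w))"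
      using mpos by (simp add: divide_le_eq)
    then have "Aw w (Suc m) \<le> (K0 * (fact m * real m powr (- Re w)))\<^sup>2"
      unfolding Aw_def by (intro power_mono) auto
    also have "\<dots> = K0\<^sup>2 * (fact m)\<^sup>2 * real m powr (- 2 * Re w)"
      using mpos by (simp add: power_mult_distrib powr_add[symmetric] power2_eq_square)
    finally have A: "Aw w (Suc m) \<le> K0\<^sup>2 * (fact m)\<^sup>2 * real m powr (- 2 * Re w)" .
    have "tt w 1 (Suc m) = Aw w (Suc m) / (fact (Suc m))\<^sup>2"
      by (simp add: tt_def pochhammer_fact[symmetric] power2_eq_square)
    also have "\<dots> \<le> K0\<^sup>2 * (fact m)\<^sup>2 * real m powr (- 2 * Re w) / (fact (Suc m))\<^sup>2"
      by (intro divide_right_mono A) simp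
    also have "\<dots> = K0\<^sup>2 * real m powr (- 2 * Re w) / (real m + 1)\<^sup>2"
    proof -
      have f: "(fact (Suc m)::real) = (real m + 1) * fact m" by (simp add: fact_Suc)
      have "(fact m :: real) \<noteq> 0" by simp
      then show ?thesis unfolding f by (simp add: power_mult_distrib)
    qed
    also have "\<dots> \<le> K0\<^sup>2 * real m powr (- 2 * Re w) / (real m)\<^sup>2"
      using mpos by (intro divide_left_mono mult_pos_pos power_mono) auto
    also have "\<dots> = K0\<^sup>2 * real m powr (- 2 * Re w - 2)"
      using mpos by (simp add: powr_diff powr_realpow)
    finally show ?thesis .
  qed
  show ?thesis by (rule that[of "K0\<^sup>2"]) (use K0 b in auto)
qed

lemma tt_summable:
  assumes "Re w > - 1 / 2" "c \<ge> 1"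
  shows "summable (tt w c)"
proof -
  obtain K where K: "K > 0" "\<And>m. m \<ge> 1 \<Longrightarrow> tt w 1 (Suc m) \<le> K * real m powr (- 2 * Re w - 2)"
    using tt_bound[OF assms(1)] by blast
  have "summable (\<lambda>m. K * real m powr (- 2 * Re w - 2))"
    using assms(1) by (intro summable_mult) (simp add: summable_real_powr_iff)
  then have "summable (\<lambda>m. tt w c (Suc m))"
  proof (rule summable_comparison_test'[where N = 1])
    fix m :: nat assume "m \<ge> 1"
    then show "norm (tt w c (Suc m)) \<le> K * real m powr (- 2 * Re w - 2)"
      using K(2)[of m] tt_le[OF assms(2), of w "Suc m"] tt_nonneg[of c w "Suc m"] assms(2) by simp
  qed
  then show ?thesis by (simp add: summable_Suc_iff)
qed

lemma tt_lim:
  assumes "Re w > - 1 / 2" "c \<ge> 1"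
  shows "(\<lambda>n. real n * tt w c n) \<longlonglongrightarrow> 0"
proof -
  obtain K where K: "K > 0" "\<And>m. m \<ge> 1 \<Longrightarrow> tt w 1 (Suc m) \<le> K * real m powr (- 2 * Re w - 2)"
    using tt_bound[OF assms(1)] by blast
  have g: "(\<lambda>m. 2 * K * real m powr (- 2 * Re w - 1)) \<longlonglongrightarrow> 2 * K * 0"
    using assms(1) by (intro tendsto_intros tendsto_neg_powr filterlim_real_sequentially) auto
  have ev: "eventually (\<lambda>m. norm (real (Suc m) * tt w c (Suc m)) \<le> 2 * K * real m powr (- 2 * Re w - 1)) sequentially"
  proof (rule eventually_sequentiallyI[of 1])
    fix m :: nat assume m: "m \<ge> 1"
    have mpos: "real m > 0" using m by simp
    have t0: "tt w c (Suc m) \<ge> 0" using tt_nonneg[of c w "Suc m"] assms(2) by simp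
    have t1: "tt w c (Suc m) \<le> K * real m powr (- 2 * Re w - 2)"
      using K(2)[OF m] tt_le[OF assms(2), of w "Suc m"] by linarith
    have s2: "real (Suc m) \<le> 2 * real m" using m by simp
    have pw: "real m * real m powr (- 2 * Re w - 2) = real m powr (- 2 * Re w - 1)"
    proof -
      have "real m powr (- 2 * Re w - 1) = real m powr (1 + (- 2 * Re w - 2))"
        by (intro arg_cong[of _ _ "\<lambda>x. real m powr x"]) linarith
      also have "\<dots> = real m powr 1 * real m powr (- 2 * Re w - 2)" by (rule powr_add)
      also have "real m powr 1 = real m" using mpos by simp
      finally show ?thesis by simp
    qed
    have "norm (real (Suc m) * tt w c (Suc m)) = real (Suc m) * tt w c (Suc m)"
      using t0 by simp
    also have "\<dots> \<le> (2 * real m) * (K * real m powr (- 2 * Re w - 2))"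
      by (rule mult_mono[OF s2 t1]) (use mpos t0 in auto)
    also have "\<dots> = 2 * K * (real m * real m powr (- 2 * Re w - 2))" by (simp only: mult_ac)
    also have "\<dots> = 2 * K * real m powr (- 2 * Re w - 1)" by (simp only: pw)
    finally show "norm (real (Suc m) * tt w c (Suc m)) \<le> 2 * K * real m powr (- 2 * Re w - 1)" .
  qed
  have "(\<lambda>m. real (Suc m) * tt w c (Suc m)) \<longlonglongrightarrow> 0"
    by (rule Lim_null_comparison[OF ev]) (use g in simp)
  then show ?thesis by (rule LIMSEQ_imp_Suc)
qed

definition SS :: "complex \<Rightarrow> real \<Rightarrow> real" where
  "SS w c = suminf (tt w c)"

lemma tt_contig:
  fixes c :: real
  assumes c: "c > 0"
  shows "c * (c + 2 * Re w) * tt w c n - (cmod (of_real c + w))\<^sup>2 * tt w (c + 1) n =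
         c * real n * tt w c n - c * real (Suc n) * tt w c (Suc n)"
proof -
  define P where "P = pochhammer c n"
  define F where "F = (fact n :: real)"
  define A where "A = Aw w n"
  define X where "X = tt w c n"
  define K where "K = (cmod (of_real c + w))\<^sup>2"
  define q where "q = (cmod (of_nat n - w))\<^sup>2"
  define s where "s = real (Suc n)"
  have P: "P > 0" unfolding P_def using c by (rule pochhammer_pos)
  have F: "F > 0" unfolding F_def by simp
  have sp: "s > 0" unfolding s_def by simp
  have cn: "c + real n > 0" using c by simp
  have X: "X = A / (P * F)" unfolding X_def tt_def A_def P_def F_def ..
  have p1: "pochhammer (c + 1) n = P * (c + real n) / c"
  proof -
    have "c * pochhammer (c + 1) n = P * (c + of_nat n)"
      unfolding P_def using pochhammer_rec[of c n] pochhammer_Suc[of c n] by simp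
    then show ?thesis using c by (simp add: field_simps)
  qed
  have t1: "tt w (c + 1) n = X * c / (c + real n)"
    unfolding X tt_def p1 A_def[symmetric] F_def[symmetric] using c cn P F by (simp add: field_simps)
  have t2: "tt w c (Suc n) = X * q / ((c + real n) * s)"
  proof -
    have "tt w c (Suc n) = (A * q) / ((P * (c + real n)) * (s * F))"
      unfolding tt_def Aw_Suc pochhammer_Suc fact_Suc A_def q_def P_def F_def s_def by simp
    then show ?thesis unfolding X using P F sp cn by (simp add: field_simps)
  qed
  have key: "(c + 2 * Re w) * (c + real n) - K = real n * (c + real n) - q"
    unfolding K_def q_def cmod_power2 by (simp add: power2_eq_square algebra_simps)
  have "c * (c + 2 * Re w) * X - K * (X * c / (c + real n)) = c * X / (c + real n) * ((c + 2 * Re w) * (c + real n) - K)"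
    using cn by (simp add: field_simps)
  also have "\<dots> = c * X / (c + real n) * (real n * (c + real n) - q)" by (simp only: key)
  also have "\<dots> = c * real n * X - c * s * (X * q / ((c + real n) * s))"
  proof -
    have e1: "X * q / ((c + real n) * s) = (X * q / (c + real n)) / s" by (simp add: divide_divide_eq_left)
    have e2: "c * s * ((X * q / (c + real n)) / s) = c * (X * q / (c + real n))" using sp by simp
    show ?thesis unfolding e1 e2 using cn by (simp add: field_simps)
  qed
  finally show ?thesis unfolding t1 t2 X_def K_def s_def .
qed

lemma SS_rec:
  assumes w: "Re w > - 1 / 2" and c: "c \<ge> 1"
  shows "c * (c + 2 * Re w) * SS w c = (cmod (of_real c + w))\<^sup>2 * SS w (c + 1)"
proof -
  have c0: "c > 0" using c by simp
  define g where "g = (\<lambda>n. c * (real n * tt w c n))"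
  have g0: "g \<longlonglongrightarrow> c * 0" unfolding g_def by (intro tendsto_intros tt_lim[OF w c])
  have "(\<lambda>n. g n - g (Suc n)) sums (g 0 - 0)"
    using g0 by (intro telescope_sums') simp
  moreover have "g n - g (Suc n) = c * (c + 2 * Re w) * tt w c n - (cmod (of_real c + w))\<^sup>2 * tt w (c + 1) n" for n
    using tt_contig[OF c0, of w n] unfolding g_def by (simp only: mult.assoc)
  ultimately have s1: "(\<lambda>n. c * (c + 2 * Re w) * tt w c n - (cmod (of_real c + w))\<^sup>2 * tt w (c + 1) n) sums 0"
    by (simp add: g_def)
  have s2: "(\<lambda>n. c * (c + 2 * Re w) * tt w c n - (cmod (of_real c + w))\<^sup>2 * tt w (c + 1) n) sums
        (c * (c + 2 * Re w) * SS w c - (cmod (of_real c + w))\<^sup>2 * SS w (c + 1))"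
    unfolding SS_def using c
    by (intro sums_diff sums_mult summable_sums tt_summable[OF w]) auto
  from sums_unique2[OF s1 s2] show ?thesis by simp
qed

definition Phi :: "complex \<Rightarrow> real \<Rightarrow> real" where
  "Phi w c = SS w c * (cmod (Gamma (of_real c + w)))\<^sup>2 / (Gamma c * Gamma (c + 2 * Re w))"

lemma real_pos_not_nonpos: "(x::real) > 0 \<Longrightarrow> x \<notin> \<int>\<^sub>\<le>\<^sub>0"
  by (auto elim!: nonpos_Ints_cases)

lemma Phi_step:
  assumes w: "Re w > - 1 / 2" and c: "c \<ge> 1"
  shows "Phi w (c + 1) = Phi w c"
proof -
  have c0: "c > 0" using c by simp
  have cr: "c + 2 * Re w > 0" using w c by simp
  have z: "Re (of_real c + w) > 0" using w c by simp
  have g1: "Gamma (of_real (c + 1) + w) = (of_real c + w) * Gamma (of_real c + w)"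
    using Gamma_plus1[OF Re_pos_not_nonpos[OF z]] by (simp add: algebra_simps)
  have g2: "Gamma (c + 1) = c * Gamma c" using Gamma_plus1[OF real_pos_not_nonpos[OF c0]] .
  have g3: "Gamma (c + 1 + 2 * Re w) = (c + 2 * Re w) * Gamma (c + 2 * Re w)"
    using Gamma_plus1[OF real_pos_not_nonpos[OF cr]] by (simp add: algebra_simps)
  have G1: "Gamma c > 0" using c0 by (rule Gamma_real_pos)
  have G2: "Gamma (c + 2 * Re w) > 0" using cr by (rule Gamma_real_pos)
  have "Phi w (c + 1) = ((cmod (of_real c + w))\<^sup>2 * SS w (c + 1)) * (cmod (Gamma (of_real c + w)))\<^sup>2 /
          (c * (c + 2 * Re w) * (Gamma c * Gamma (c + 2 * Re w)))"
    unfolding Phi_def g1 g2 g3 by (simp add: norm_mult power_mult_distrib mult_ac)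
  also have "\<dots> = (c * (c + 2 * Re w) * SS w c) * (cmod (Gamma (of_real c + w)))\<^sup>2 /
          (c * (c + 2 * Re w) * (Gamma c * Gamma (c + 2 * Re w)))"
    by (simp only: SS_rec[OF w c, symmetric])
  also have "\<dots> = Phi w c"
  proof -
    have a: "c \<noteq> 0" "c + 2 * Re w \<noteq> 0" using c0 cr by auto
    show ?thesis unfolding Phi_def mult.assoc
      by (simp only: mult_divide_mult_cancel_left[OF a(1)] mult_divide_mult_cancel_left[OF a(2)])
  qed
  finally show ?thesis .
qed

lemma Phi_const:
  assumes w: "Re w > - 1 / 2"
  shows "Phi w (1 + real N) = Phi w 1"
proof (induction N)
  case (Suc N)
  have "Phi w (1 + real (Suc N)) = Phi w ((1 + real N) + 1)" by (simp add: algebra_simps)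
  also have "\<dots> = Phi w (1 + real N)" by (rule Phi_step[OF w]) simp
  finally show ?case using Suc by simp
qed simp

lemma tt_0: "tt w c 0 = 1"
  by (simp add: tt_def Aw_def)

lemma poch_shift_bound:
  "pochhammer (1 + real N) (Suc n) \<ge> (1 + real N) * pochhammer 1 (Suc n)"
proof -
  have "pochhammer (1 + real N) (Suc n) = (1 + real N) * pochhammer (2 + real N) n"
    using pochhammer_rec[of "1 + real N" n] by (simp add: algebra_simps)
  moreover have "pochhammer 1 (Suc n) = pochhammer (2::real) n"
    using pochhammer_rec[of "1::real" n] by simp
  moreover have "pochhammer (2::real) n \<le> pochhammer (2 + real N) n"
    by (rule poch_mono_real) auto
  ultimately show ?thesis by (simp add: mult_left_mono)
qed

lemma SS_lim:
  assumes w: "Re w > - 1 / 2"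
  shows "(\<lambda>N. SS w (1 + real N)) \<longlonglongrightarrow> 1"
proof -
  define C where "C = (\<Sum>n. tt w 1 (Suc n))"
  have sum1: "summable (\<lambda>n. tt w 1 (Suc n))"
    using tt_summable[OF w, of 1] by (simp add: summable_Suc_iff)
  have eqS: "SS w (1 + real N) - 1 = (\<Sum>n. tt w (1 + real N) (Suc n))" for N
    unfolding SS_def using suminf_split_head[OF tt_summable[OF w, of "1 + real N"]] by (simp add: tt_0)
  have bnd: "norm (SS w (1 + real N) - 1) \<le> C / (1 + real N)" for N
  proof -
    have le: "tt w (1 + real N) (Suc n) \<le> tt w 1 (Suc n) / (1 + real N)" for n
    proof -
      define A where "A = Aw w (Suc n)"
      define P1 where "P1 = pochhammer (1::real) (Suc n)"
      define PN where "PN = pochhammer (1 + real N) (Suc n)"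
      define F where "F = (fact (Suc n) :: real)"
      have A: "A \<ge> 0" unfolding A_def by (rule Aw_nonneg)
      have P1: "P1 > 0" unfolding P1_def by (rule pochhammer_pos) simp
      have PN: "PN \<ge> (1 + real N) * P1" unfolding PN_def P1_def by (rule poch_shift_bound)
      have F: "F > 0" unfolding F_def by simp
      have N1: "1 + real N > 0" by simp
      have b: "(1 + real N) * P1 * F > 0" using P1 F N1 by simp
      have a: "PN * F > 0"
      proof -
        have "(1 + real N) * P1 > 0" using N1 P1 by simp
        then have "PN > 0" using PN by linarith
        then show ?thesis using F by simp
      qed
      have "A / (PN * F) \<le> A / ((1 + real N) * P1 * F)"
        using F by (intro divide_left_mono[OF mult_right_mono[OF PN] A mult_pos_pos[OF a b]]) simp
      also have "\<dots> = (A / (P1 * F)) / (1 + real N)" by (simp add: divide_divide_eq_left mult_ac)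
      finally show ?thesis unfolding tt_def A_def P1_def PN_def F_def .
    qed
    have nn: "0 \<le> tt w (1 + real N) (Suc n)" for n by (rule tt_nonneg) simp
    have s2: "summable (\<lambda>n. tt w (1 + real N) (Suc n))"
      using tt_summable[OF w, of "1 + real N"] by (simp add: summable_Suc_iff)
    have "(\<Sum>n. tt w (1 + real N) (Suc n)) \<le> (\<Sum>n. tt w 1 (Suc n) / (1 + real N))"
      by (rule suminf_le[OF le s2 summable_divide[OF sum1]])
    also have "\<dots> = C / (1 + real N)" unfolding C_def using sum1 by (rule suminf_divide)
    finally have "(\<Sum>n. tt w (1 + real N) (Suc n)) \<le> C / (1 + real N)" .
    moreover have "0 \<le> (\<Sum>n. tt w (1 + real N) (Suc n))" by (rule suminf_nonneg[OF s2 nn])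
    ultimately show ?thesis by (simp add: eqS)
  qed
  have L: "(\<lambda>N. C / (1 + real N)) \<longlonglongrightarrow> 0"
    by (intro tendsto_divide_0[OF tendsto_const] filterlim_at_top_imp_at_infinity
              filterlim_tendsto_add_at_top[OF tendsto_const filterlim_real_sequentially])
  have "(\<lambda>N. SS w (1 + real N) - 1) \<longlonglongrightarrow> 0"
    by (rule Lim_null_comparison[OF always_eventually L]) (rule allI, rule bnd)
  then have "(\<lambda>N. SS w (1 + real N) - 1 + 1) \<longlonglongrightarrow> 0 + 1" by (intro tendsto_intros)
  then show ?thesis by simp
qed

lemma GR:
  fixes z :: "'a :: Gamma"
  assumes "z \<notin> \<int>\<^sub>\<le>\<^sub>0"
  shows "(\<lambda>n. Gamma (z + of_nat (Suc n)) / (fact n * exp (z * of_real (ln (of_nat n))))) \<longlonglongrightarrow> 1"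
proof -
  have G: "Gamma z \<noteq> 0" using assms by (simp add: Gamma_eq_zero_iff)
  have e: "Gamma (z + of_nat (Suc n)) / (fact n * exp (z * of_real (ln (of_nat n)))) = Gamma z * rGamma_series z n" for n
    using pochhammer_Gamma[OF assms, of "Suc n"] G unfolding rGamma_series_def by (simp add: field_simps)
  have E: "(\<lambda>n. Gamma (z + of_nat (Suc n)) / (fact n * exp (z * of_real (ln (of_nat n))))) = (\<lambda>n. Gamma z * rGamma_series z n)"
    by (rule ext, rule e)
  have "(\<lambda>n. Gamma z * rGamma_series z n) \<longlonglongrightarrow> Gamma z * rGamma z"
    by (intro tendsto_intros)
  also have "Gamma z * rGamma z = 1" using G by (simp add: rGamma_inverse_Gamma)
  finally have L: "(\<lambda>n. Gamma z * rGamma_series z n) \<longlonglongrightarrow> 1" .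
  show ?thesis unfolding E by (rule L)
qed

lemma L7:
  assumes w: "Re w > - 1 / 2"
  shows "(\<lambda>N. (cmod (Gamma (of_real (1 + real N) + w)))\<^sup>2 / (Gamma (1 + real N) * Gamma (1 + real N + 2 * Re w))) \<longlonglongrightarrow> 1"
proof -
  have z1: "(1 + w) \<notin> \<int>\<^sub>\<le>\<^sub>0" by (rule Re_pos_not_nonpos) (use w in simp)
  have z3: "(1 + 2 * Re w) \<notin> \<int>\<^sub>\<le>\<^sub>0" by (rule real_pos_not_nonpos) (use w in simp)
  have z2: "(1::real) \<notin> \<int>\<^sub>\<le>\<^sub>0" by (rule real_pos_not_nonpos) simp
  define E1 where "E1 = (\<lambda>n. Gamma ((1 + w) + of_nat (Suc n)) / (fact n * exp ((1 + w) * of_real (ln (of_nat n)))))"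
  define E2 where "E2 = (\<lambda>n. Gamma ((1::real) + of_nat (Suc n)) / (fact n * exp (1 * of_real (ln (of_nat n)))))"
  define E3 where "E3 = (\<lambda>n. Gamma ((1 + 2 * Re w) + of_nat (Suc n)) / (fact n * exp ((1 + 2 * Re w) * of_real (ln (of_nat n)))))"
  have l1: "E1 \<longlonglongrightarrow> 1" unfolding E1_def by (rule GR[OF z1])
  have l2: "E2 \<longlonglongrightarrow> 1" unfolding E2_def by (rule GR[OF z2])
  have l3: "E3 \<longlonglongrightarrow> 1" unfolding E3_def by (rule GR[OF z3])
  have lim: "(\<lambda>n. (cmod (E1 n))\<^sup>2 / (E2 n * E3 n)) \<longlonglongrightarrow> (cmod 1)\<^sup>2 / (1 * 1)"
    by (intro tendsto_intros l1 l2 l3) simp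
  have eq: "(cmod (E1 n))\<^sup>2 / (E2 n * E3 n) =
     (cmod (Gamma (of_real (1 + real (Suc n)) + w)))\<^sup>2 / (Gamma (1 + real (Suc n)) * Gamma (1 + real (Suc n) + 2 * Re w))" for n
  proof -
    define g1 where "g1 = cmod (Gamma ((1 + w) + of_nat (Suc n)))"
    define g2 where "g2 = Gamma ((1::real) + of_nat (Suc n))"
    define g3 where "g3 = Gamma ((1 + 2 * Re w) + of_nat (Suc n))"
    define F where "F = (fact n :: real)"
    define e1 where "e1 = exp ((1 + Re w) * ln (real n))"
    define e2 where "e2 = exp (ln (real n))"
    define e3 where "e3 = exp ((1 + 2 * Re w) * ln (real n))"
    have a1: "cmod (E1 n) = g1 / (F * e1)"
      unfolding E1_def g1_def F_def e1_def by (simp add: norm_divide norm_mult)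
    have a2: "E2 n = g2 / (F * e2)" unfolding E2_def g2_def F_def e2_def by simp
    have a3: "E3 n = g3 / (F * e3)" unfolding E3_def g3_def F_def e3_def by simp
    have ex: "e1 * e1 = e2 * e3" unfolding e1_def e2_def e3_def by (simp add: mult_exp_exp algebra_simps)
    have F: "F > 0" unfolding F_def by simp
    have g2: "g2 > 0" unfolding g2_def by (rule Gamma_real_pos) simp
    have g3: "g3 > 0" unfolding g3_def by (rule Gamma_real_pos) (use w in simp)
    have e1: "e1 > 0" "e2 > 0" "e3 > 0" unfolding e1_def e2_def e3_def by simp_all
    have "(cmod (E1 n))\<^sup>2 / (E2 n * E3 n) = (g1 * g1) * (F * F * (e2 * e3)) / ((F * F * (e1 * e1)) * (g2 * g3))"
      unfolding a1 a2 a3 power2_eq_square using F g2 g3 e1 by (simp add: field_simps)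
    also have "\<dots> = g1\<^sup>2 / (g2 * g3)"
      unfolding ex power2_eq_square using F g2 g3 e1 by (simp add: field_simps)
    also have "g1 = cmod (Gamma (of_real (1 + real (Suc n)) + w))"
      unfolding g1_def by (simp add: algebra_simps)
    also have "g2 = Gamma (1 + real (Suc n))" unfolding g2_def by simp
    also have "g3 = Gamma (1 + real (Suc n) + 2 * Re w)" unfolding g3_def by (simp add: algebra_simps)
    finally show ?thesis .
  qed
  have "(\<lambda>n. (cmod (Gamma (of_real (1 + real (Suc n)) + w)))\<^sup>2 / (Gamma (1 + real (Suc n)) * Gamma (1 + real (Suc n) + 2 * Re w))) \<longlonglongrightarrow> 1"
    using lim unfolding eq by simp
  then show ?thesis by (rule LIMSEQ_imp_Suc)
qed

lemma GAUSS:
  assumes w: "Re w > - 1 / 2"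
  shows "summable (\<lambda>n. (cmod (newton_poly n w))\<^sup>2)"
    and "(\<Sum>n. (cmod (newton_poly n w))\<^sup>2) = Gamma (1 + 2 * Re w) / (cmod (Gamma (1 + w)))\<^sup>2"
proof -
  have e: "(\<lambda>n. (cmod (newton_poly n w))\<^sup>2) = tt w 1" by (rule ext) (rule newton_poly_tt)
  show "summable (\<lambda>n. (cmod (newton_poly n w))\<^sup>2)" unfolding e by (rule tt_summable[OF w]) simp
  have "(\<lambda>N. Phi w (1 + real N)) \<longlonglongrightarrow> 1 * 1"
  proof -
    have "(\<lambda>N. SS w (1 + real N) * ((cmod (Gamma (of_real (1 + real N) + w)))\<^sup>2 / (Gamma (1 + real N) * Gamma (1 + real N + 2 * Re w))))
            \<longlonglongrightarrow> 1 * 1"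
      by (intro tendsto_mult SS_lim[OF w] L7[OF w])
    then show ?thesis unfolding Phi_def by (simp add: algebra_simps)
  qed
  then have "(\<lambda>N. Phi w 1) \<longlonglongrightarrow> 1" unfolding Phi_const[OF w] by simp
  then have P1: "Phi w 1 = 1" by (simp add: LIMSEQ_const_iff)
  have G: "cmod (Gamma (1 + w)) > 0"
    using Gamma_nz[of "1 + w"] w by simp
  have "SS w 1 * (cmod (Gamma (1 + w)))\<^sup>2 / Gamma (1 + 2 * Re w) = 1"
    using P1 unfolding Phi_def by (simp only: of_real_1 Gamma_1 mult_1)
  moreover have Gp: "Gamma (1 + 2 * Re w) > 0" by (rule Gamma_real_pos) (use w in simp)
  ultimately have "SS w 1 * (cmod (Gamma (1 + w)))\<^sup>2 = Gamma (1 + 2 * Re w)"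
    by (simp add: divide_eq_eq)
  then have "SS w 1 = Gamma (1 + 2 * Re w) / (cmod (Gamma (1 + w)))\<^sup>2"
    using G by (simp add: eq_divide_eq)
  then show "(\<Sum>n. (cmod (newton_poly n w))\<^sup>2) = Gamma (1 + 2 * Re w) / (cmod (Gamma (1 + w)))\<^sup>2"
    unfolding e SS_def by simp
qed




lemma countable_nonpos_Ints: "countable (\<int>\<^sub>\<le>\<^sub>0 :: complex set)"
proof -
  have "countable (\<int> :: complex set)" unfolding Ints_def by (rule countable_image) simp
  then show ?thesis by (rule countable_subset[OF nonpos_Ints_subset_Ints])
qed

lemma Gamma_meas[measurable]: "(Gamma :: complex \<Rightarrow> complex) \<in> borel_measurable borel"
  by (rule borel_measurable_continuous_countable_exceptions[OF countable_nonpos_Ints])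
     (rule continuous_on_Gamma, auto)

lemma borel_measurable_cnj'[measurable (raw)]:
  "f \<in> borel_measurable M \<Longrightarrow> (\<lambda>x. cnj (f x :: complex)) \<in> borel_measurable M"
  by (rule borel_measurable_continuous_on[where f=cnj]) (auto intro: continuous_intros)

lemma borel_measurable_Complex'[measurable (raw)]:
  "f \<in> borel_measurable M \<Longrightarrow> g \<in> borel_measurable M \<Longrightarrow> (\<lambda>x. Complex (f x) (g x)) \<in> borel_measurable M"
proof -
  assume f: "f \<in> borel_measurable M" and g: "g \<in> borel_measurable M"
  have e: "(\<lambda>x. Complex (f x) (g x)) = (\<lambda>x. of_real (f x) + g x *\<^sub>R \<i>)" by (auto simp: complex_eq_iff)
  show ?thesis unfolding e using f g by measurable
qed

lemma SUMLEM:
  fixes b q :: real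
  assumes b: "b > 0" and q: "0 \<le> q" "q < 1"
  shows "(\<lambda>m. Gamma (real m + b) / fact m * q ^ m) sums (Gamma b * (1 - q) powr (- b))"
proof -
  have "(\<lambda>n. ((- b) gchoose n) * (- q) ^ n) sums (1 + (- q)) powr (- b)"
    by (rule gen_binomial_real) (use q in simp)
  moreover have "((- b) gchoose n) * (- q) ^ n = Gamma (real n + b) / fact n * q ^ n / Gamma b" for n
  proof -
    have bn: "b \<notin> \<int>\<^sub>\<le>\<^sub>0" using b by (auto elim!: nonpos_Ints_cases)
    have "((- b) gchoose n) * (- q) ^ n = ((-1) ^ n * (-1) ^ n) * pochhammer b n / fact n * q ^ n"
      by (simp add: gbinomial_pochhammer power_minus[of q] mult_ac)
    also have "(-1::real) ^ n * (-1) ^ n = 1" by (simp flip: power_add)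
    also have "pochhammer b n = Gamma (b + real n) / Gamma b" using pochhammer_Gamma[OF bn] by simp
    finally show ?thesis by (simp add: add.commute)
  qed
  ultimately have "(\<lambda>n. Gamma (real n + b) / fact n * q ^ n / Gamma b) sums (1 - q) powr (- b)" by simp
  then have "(\<lambda>n. Gamma b * (Gamma (real n + b) / fact n * q ^ n / Gamma b)) sums (Gamma b * (1 - q) powr (- b))"
    by (rule sums_mult)
  moreover have "Gamma b \<noteq> 0" using Gamma_real_pos[OF b] by simp
  ultimately show ?thesis by simp
qed

lemma SHIFT:
  fixes r \<theta> \<beta> :: real
  assumes r: "r > 0"
  shows "has_bochner_integral lborel (\<lambda>y. of_real ((cmod (Gamma (Complex r (y - \<beta>))))\<^sup>2) * exp (\<i> * of_real (\<theta> * y)))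
           (exp (\<i> * of_real (\<theta> * \<beta>)) * of_real (2 * pi * Gamma (2 * r) * hh r (- \<theta>)))"
proof -
  have "has_bochner_integral lborel (\<lambda>y. of_real ((cmod (Gamma (Complex r (- \<beta> + 1 * y))))\<^sup>2) * exp (\<i> * of_real (\<theta> * (- \<beta> + 1 * y))))
          (of_real (2 * pi * Gamma (2 * r) * hh r (- \<theta>)) /\<^sub>R \<bar>1\<bar>)"
    using FOU(2)[OF r, of \<theta>] by (subst (asm) lborel_has_bochner_integral_real_affine_iff[where c=1 and t="- \<beta>"]) auto
  then have "has_bochner_integral lborel (\<lambda>y. exp (\<i> * of_real (\<theta> * \<beta>)) * (of_real ((cmod (Gamma (Complex r (- \<beta> + 1 * y))))\<^sup>2) * exp (\<i> * of_real (\<theta> * (- \<beta> + 1 * y)))))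
          (exp (\<i> * of_real (\<theta> * \<beta>)) * (of_real (2 * pi * Gamma (2 * r) * hh r (- \<theta>)) /\<^sub>R \<bar>1\<bar>))"
    by (rule has_bochner_integral_mult_right)
  then show ?thesis
  proof (elim hbi_eq)
    fix y
    have "\<i> * of_real (\<theta> * \<beta>) + \<i> * of_real (\<theta> * (- \<beta> + 1 * y)) = \<i> * of_real (\<theta> * y)"
      by (simp add: algebra_simps)
    then show "exp (\<i> * of_real (\<theta> * \<beta>)) * (of_real ((cmod (Gamma (Complex r (- \<beta> + 1 * y))))\<^sup>2) * exp (\<i> * of_real (\<theta> * (- \<beta> + 1 * y)))) =
       of_real ((cmod (Gamma (Complex r (y - \<beta>))))\<^sup>2) * exp (\<i> * of_real (\<theta> * y))"
      by (simp add: exp_add[symmetric] mult_ac)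
  qed simp
qed

lemma SHIFTn:
  fixes r \<beta> :: real
  assumes r: "r > 0"
  shows "has_bochner_integral lborel (\<lambda>y. (cmod (Gamma (Complex r (y - \<beta>))))\<^sup>2) (2 * pi * Gamma (2 * r) * hh r 0)"
proof -
  have "has_bochner_integral lborel (\<lambda>y. Re (of_real ((cmod (Gamma (Complex r (y - \<beta>))))\<^sup>2) * exp (\<i> * of_real (0 * y))))
          (Re (exp (\<i> * of_real (0 * \<beta>)) * of_real (2 * pi * Gamma (2 * r) * hh r (- 0))))"
    by (rule has_bochner_integral_Re[OF SHIFT[OF r]])
  then show ?thesis by simp
qed

lemma HH:
  fixes s t r :: real
  assumes s: "s > 0" and t: "t > 0"
  shows "hh r (- (ln s - ln t)) = exp (r * ln s + r * ln t - 2 * r * ln (s + t))"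
proof -
  have e: "exp (- (ln s - ln t)) = t / s" using s t by (simp add: exp_diff)
  have l: "ln (1 + t / s) = ln (s + t) - ln s"
  proof -
    have "1 + t / s = (s + t) / s" using s by (simp add: field_simps)
    then show ?thesis using s t by (simp add: ln_div)
  qed
  have "hh r (- (ln s - ln t)) = exp (r * (- (ln s - ln t))) * exp (- 2 * r * ln (1 + t / s))"
  proof -
    have "0 < 1 + t / s" using s t by (intro add_pos_pos) auto
    then show ?thesis unfolding hh_def e by (simp add: powr_def)
  qed
  also have "\<dots> = exp (r * ln s + r * ln t - 2 * r * ln (s + t))"
    unfolding l mult_exp_exp by (simp add: algebra_simps)
  finally show ?thesis .
qed

definition Rm :: "real \<Rightarrow> real \<Rightarrow> real \<Rightarrow> nat \<Rightarrow> real" where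
  "Rm s t \<rho> m = exp ((real m - 1) / 2 * (ln s + ln t)) * Gamma (2 * ((real m - 1) / 2 + \<rho> + 1)) *
       hh ((real m - 1) / 2 + \<rho> + 1) (- (ln s - ln t)) / fact m"

lemma RSUM:
  fixes s t \<rho> :: real
  assumes s: "0 < s" "s < 1" and t: "0 < t" "t < 1" and \<rho>: "\<rho> > - 1 / 2"
  shows "Rm s t \<rho> sums (exp (\<rho> * (ln s + ln t)) * Gamma (2 * \<rho> + 1) * exp (- (2 * \<rho> + 1) * ln (s + t - s * t)))"
proof -
  define b where "b = 2 * \<rho> + 1"
  have b: "b > 0" using \<rho> by (simp add: b_def)
  define q where "q = s * t / (s + t)"
  have st: "s * t < s + t"
  proof -
    have "s * t < s * 1" using s t by (intro mult_strict_left_mono) auto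
    then show ?thesis using t by simp
  qed
  have spt: "s + t > 0" using s t by simp
  have q0: "0 \<le> q" unfolding q_def using s t by simp
  have q1: "q < 1" unfolding q_def using st spt by simp
  have d: "s + t - s * t > 0" using st by simp
  define A where "A = exp (\<rho> * (ln s + ln t) - b * ln (s + t))"
  have S: "(\<lambda>m. A * (Gamma (real m + b) / fact m * q ^ m)) sums (A * (Gamma b * (1 - q) powr (- b)))"
    by (rule sums_mult[OF SUMLEM[OF b q0 q1]])
  have qe: "q = exp (ln s + ln t - ln (s + t))"
    unfolding q_def using s t by (simp add: exp_diff exp_add)
  have pt: "Rm s t \<rho> m = A * (Gamma (real m + b) / fact m * q ^ m)" for m
  proof -
    define r where "r = (real m - 1) / 2 + \<rho> + 1"
    have r2: "2 * r = real m + b" unfolding r_def b_def by (simp add: field_simps)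
    have "q ^ m = exp (real m * (ln s + ln t - ln (s + t)))"
      unfolding qe by (simp add: exp_of_nat_mult)
    then have "A * (Gamma (real m + b) / fact m * q ^ m) =
       Gamma (real m + b) / fact m * exp ((\<rho> * (ln s + ln t) - b * ln (s + t)) + real m * (ln s + ln t - ln (s + t)))"
      unfolding A_def by (simp add: mult_exp_exp[symmetric] mult_ac)
    also have "(\<rho> * (ln s + ln t) - b * ln (s + t)) + real m * (ln s + ln t - ln (s + t)) =
               (real m - 1) / 2 * (ln s + ln t) + (r * ln s + r * ln t - 2 * r * ln (s + t))"
      unfolding r_def b_def by (simp add: field_simps)
    finally have f1: "A * (Gamma (real m + b) / fact m * q ^ m) =
       Gamma (real m + b) / fact m * exp ((real m - 1) / 2 * (ln s + ln t) + (r * ln s + r * ln t - 2 * r * ln (s + t)))" .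
    have f2: "Rm s t \<rho> m = exp ((real m - 1) / 2 * (ln s + ln t)) * Gamma (real m + b) *
                     exp (r * ln s + r * ln t - 2 * r * ln (s + t)) / fact m"
      unfolding Rm_def r_def[symmetric] r2 HH[OF s(1) t(1)] ..
    have f3: "exp ((real m - 1) / 2 * (ln s + ln t)) * Gamma (real m + b) *
                     exp (r * ln s + r * ln t - 2 * r * ln (s + t)) / fact m =
              Gamma (real m + b) / fact m * exp ((real m - 1) / 2 * (ln s + ln t) + (r * ln s + r * ln t - 2 * r * ln (s + t)))"
      by (simp only: exp_add) (simp add: mult_ac)
    show ?thesis unfolding f2 f3 f1 ..
  qed
  have tv: "A * (Gamma b * (1 - q) powr (- b)) = exp (\<rho> * (ln s + ln t)) * Gamma (2 * \<rho> + 1) * exp (- (2 * \<rho> + 1) * ln (s + t - s * t))"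
  proof -
    have "1 - q = (s + t - s * t) / (s + t)" unfolding q_def using spt by (simp add: field_simps)
    then have "(1 - q) powr (- b) = exp (- b * (ln (s + t - s * t) - ln (s + t)))"
      using d spt q1 by (simp add: powr_def ln_div)
    then show ?thesis unfolding A_def b_def[symmetric]
      by (simp add: mult_exp_exp[symmetric] mult_ac algebra_simps flip: exp_add)
  qed
  have E: "Rm s t \<rho> = (\<lambda>m. A * (Gamma (real m + b) / fact m * q ^ m))" by (rule ext) (rule pt)
  show ?thesis using S unfolding tv E .
qed

lemma PW:
  fixes s t :: real and w z :: complex
  assumes s: "s > 0" and t: "t > 0" and gz: "Gamma (z + 1) \<noteq> 0" and gw: "Gamma (cnj w + 1) \<noteq> 0"
    and N: "newton_kernel_norm w > 0"
  shows "of_real ((cmod (Gamma (z + 1)))\<^sup>2) * (T_pow s (newton_kernel_normalized w) z * cnj (T_pow t (newton_kernel_normalized w) z)) =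
     of_real (exp (Re z * (ln s + ln t)) * (cmod (Gamma (z + cnj w + 1)))\<^sup>2 / ((cmod (Gamma (cnj w + 1)))\<^sup>2 * (newton_kernel_norm w)\<^sup>2))
       * exp (\<i> * of_real ((ln s - ln t) * Im z))"
proof -
  define k where "k = newton_kernel_normalized w"
  define Nn where "Nn = newton_kernel_norm w"
  have Nn: "Nn > 0" using N by (simp add: Nn_def)
  have e1: "T_pow s k z * cnj (T_pow t k z) = (rpow s z * cnj (rpow t z)) * (k z * cnj (k z))"
    unfolding T_pow_def by (simp add: mult_ac)
  have e2: "k z * cnj (k z) = of_real ((cmod (k z))\<^sup>2)" by (rule complex_norm_square[symmetric])
  have e3: "cmod (k z) = cmod (Gamma (z + cnj w + 1)) / (cmod (Gamma (z + 1)) * cmod (Gamma (cnj w + 1)) * Nn)"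
    unfolding k_def newton_kernel_normalized_def newton_kernel_def Nn_def
    using N by (simp add: norm_divide norm_mult)
  have gz': "cmod (Gamma (z + 1)) > 0" using gz by simp
  have gw': "cmod (Gamma (cnj w + 1)) > 0" using gw by simp
  have e4: "(cmod (Gamma (z + 1)))\<^sup>2 * (cmod (k z))\<^sup>2 = (cmod (Gamma (z + cnj w + 1)))\<^sup>2 / ((cmod (Gamma (cnj w + 1)))\<^sup>2 * Nn\<^sup>2)"
    unfolding e3 using gz' gw' Nn by (simp add: field_simps power2_eq_square)
  have e5: "rpow s z * cnj (rpow t z) = of_real (exp (Re z * (ln s + ln t))) * exp (\<i> * of_real ((ln s - ln t) * Im z))"
  proof -
    have "rpow s z * cnj (rpow t z) = exp (z * of_real (ln s) + cnj z * of_real (ln t))"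
      unfolding rpow_def by (simp add: exp_cnj exp_add)
    also have "z * of_real (ln s) + cnj z * of_real (ln t) = of_real (Re z * (ln s + ln t)) + \<i> * of_real ((ln s - ln t) * Im z)"
      by (simp add: complex_eq_iff algebra_simps)
    finally show ?thesis by (simp only: exp_add exp_of_real)
  qed
  have "of_real ((cmod (Gamma (z + 1)))\<^sup>2) * (T_pow s k z * cnj (T_pow t k z)) =
        (rpow s z * cnj (rpow t z)) * of_real ((cmod (Gamma (z + 1)))\<^sup>2 * (cmod (k z))\<^sup>2)"
    unfolding e1 e2 by (simp add: mult_ac)
  also have "\<dots> = of_real (exp (Re z * (ln s + ln t)) * (cmod (Gamma (z + cnj w + 1)))\<^sup>2 / ((cmod (Gamma (cnj w + 1)))\<^sup>2 * Nn\<^sup>2))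
       * exp (\<i> * of_real ((ln s - ln t) * Im z))"
    unfolding e4 e5 by (simp add: mult_ac)
  finally show ?thesis unfolding k_def Nn_def .
qed

theorem mainTheorem2:
  fixes s t :: real and w :: complex
  assumes "0 < s" "s < 1" "0 < t" "t < 1" "Re w > -1/2"
  shows "L2_inner newton_mu (T_pow s (newton_kernel_normalized w))
                            (T_pow t (newton_kernel_normalized w))
         = rpow s w * rpow t (cnj w) / of_real ((s + t - s * t) powr (2 * Re w + 1))"
proof -
  note s = assms(1,2) and t = assms(3,4) and w = assms(5)
  define k where "k = newton_kernel_normalized w"
  define \<rho> where "\<rho> = Re w"
  define \<beta> where "\<beta> = Im w"
  define \<theta> where "\<theta> = ln s - ln t"
  define L where "L = ln s + ln t"
  define Nn where "Nn = newton_kernel_norm w"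
  have \<rho>: "\<rho> > - 1 / 2" using w by (simp add: \<rho>_def)
  have G1w: "cmod (Gamma (1 + w)) > 0" using Gamma_nz[of "1 + w"] w by simp
  have Gcw: "Gamma (cnj w + 1) \<noteq> 0" using Gamma_nz[of "cnj w + 1"] w by simp
  have cG: "cmod (Gamma (cnj w + 1)) = cmod (Gamma (1 + w))"
  proof -
    have "Gamma (cnj w + 1) = cnj (Gamma (1 + w))" by (simp add: cnj_Gamma add.commute)
    then show ?thesis by simp
  qed
  have Gb: "Gamma (2 * \<rho> + 1) > 0" using \<rho> by (intro Gamma_real_pos) simp
  have Nsq: "Nn\<^sup>2 = Gamma (1 + 2 * \<rho>) / (cmod (Gamma (1 + w)))\<^sup>2"
  proof -
    have "Nn = sqrt (\<Sum>n. (cmod (newton_poly n w))\<^sup>2)" by (simp add: Nn_def newton_kernel_norm_def)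
    also have "\<dots> = sqrt (Gamma (1 + 2 * \<rho>) / (cmod (Gamma (1 + w)))\<^sup>2)" using GAUSS(2)[OF w] by (simp add: \<rho>_def)
    finally show ?thesis using Gb by (simp add: add.commute)
  qed
  have Npos: "Nn > 0"
  proof -
    have "Nn\<^sup>2 > 0" unfolding Nsq using Gb G1w by (simp add: add.commute)
    moreover have "Nn \<ge> 0" using suminf_nonneg[OF GAUSS(1)[OF w]] by (simp add: Nn_def newton_kernel_norm_def)
    ultimately show ?thesis by (cases "Nn = 0") auto
  qed
  define C0 where "C0 = (cmod (Gamma (cnj w + 1)))\<^sup>2 * Nn\<^sup>2"
  have C0: "C0 = Gamma (2 * \<rho> + 1)" unfolding C0_def cG Nsq using G1w by (simp add: add.commute)
  have C0pos: "C0 > 0" using C0 Gb by simp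
  define H where "H = (\<lambda>z. T_pow s k z * cnj (T_pow t k z))"
  define dens where "dens = (\<lambda>(m::nat, y::real). (cmod (Gamma (Complex ((real m - 1) / 2) y + 1)))\<^sup>2 / (2 * pi * fact m))"
  define \<phi> where "\<phi> = (\<lambda>(m::nat, y::real). Complex ((real m - 1) / 2) y)"
  define M where "M = (count_space (UNIV::nat set) \<Otimes>\<^sub>M (lborel::real measure))"
  interpret PS: pair_sigma_finite "count_space (UNIV::nat set)" "lborel::real measure"
    by (rule pair_sigma_finite.intro[OF sigma_finite_measure_count_space lborel.sigma_finite_measure_axioms])
  have mu: "newton_mu = distr (density M (\<lambda>p. ennreal (dens p))) borel \<phi>"
    unfolding newton_mu_def M_def dens_def \<phi>_def by (simp add: prod.case_distrib)
  have Hmeas[measurable]: "H \<in> borel_measurable borel"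
    unfolding H_def k_def T_pow_def rpow_def newton_kernel_normalized_def newton_kernel_def by measurable
  have phimeas[measurable]: "\<phi> \<in> M \<rightarrow>\<^sub>M borel"
    unfolding \<phi>_def M_def by measurable
  have densE: "dens = (\<lambda>p. (cmod (Gamma (\<phi> p + 1)))\<^sup>2 / (2 * pi * fact (fst p)))"
    by (auto simp: dens_def \<phi>_def fun_eq_iff)
  have fm: "(\<lambda>p. fact (fst p) :: real) \<in> borel_measurable M"
    unfolding M_def by measurable
  have densmeas[measurable]: "dens \<in> borel_measurable M"
    unfolding densE using fm by measurable
  define P where "P = (\<lambda>p. dens p *\<^sub>R H (\<phi> p))"
  have Pmeas[measurable]: "P \<in> borel_measurable M" unfolding P_def by measurable
  have step1: "L2_inner newton_mu (T_pow s k) (T_pow t k) = integral\<^sup>L M P"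
  proof -
    have "L2_inner newton_mu (T_pow s k) (T_pow t k) = (\<integral>z. H z \<partial>newton_mu)"
      unfolding L2_inner_def H_def ..
    also have "\<dots> = (\<integral>p. H (\<phi> p) \<partial>density M (\<lambda>p. ennreal (dens p)))"
      unfolding mu by (rule integral_distr) measurable
    also have "\<dots> = integral\<^sup>L M P"
      unfolding P_def
      by (rule integral_density[OF _ densmeas]) (measurable, rule AE_I2, simp add: dens_def split: prod.split)
    finally show ?thesis .
  qed
  define x where "x = (\<lambda>m::nat. (real m - 1) / 2)"
  define r where "r = (\<lambda>m::nat. (real m - 1) / 2 + \<rho> + 1)"
  have rpos: "r m > 0" for m unfolding r_def using \<rho> by (simp add: field_simps)
  define c where "c = (\<lambda>m::nat. exp (x m * L) / (2 * pi * fact m * C0))"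
  have cpos: "c m > 0" for m unfolding c_def using C0pos by simp
  have Ppt: "P (m, y) = of_real (c m) * (of_real ((cmod (Gamma (Complex (r m) (y - \<beta>))))\<^sup>2) * exp (\<i> * of_real (\<theta> * y)))" for m y
  proof -
    define z where "z = Complex (x m) y"
    have m0: "0 \<le> real m" by simp
    have xp: "0 < (real m - 1) / 2 + 1" using m0 by (simp add: field_simps)
    have gz: "Gamma (z + 1) \<noteq> 0" using Gamma_nz[of "z + 1"] xp by (simp add: z_def x_def)
    have zw: "z + cnj w + 1 = Complex (r m) (y - \<beta>)"
      by (simp add: complex_eq_iff z_def r_def x_def \<rho>_def \<beta>_def)
    have "P (m, y) = of_real (1 / (2 * pi * fact m)) * (of_real ((cmod (Gamma (z + 1)))\<^sup>2) * H z)"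
      unfolding P_def dens_def \<phi>_def z_def x_def by (simp add: scaleR_conv_of_real)
    also have "of_real ((cmod (Gamma (z + 1)))\<^sup>2) * H z =
       of_real (exp (Re z * (ln s + ln t)) * (cmod (Gamma (z + cnj w + 1)))\<^sup>2 / ((cmod (Gamma (cnj w + 1)))\<^sup>2 * (newton_kernel_norm w)\<^sup>2))
       * exp (\<i> * of_real ((ln s - ln t) * Im z))"
      unfolding H_def k_def by (rule PW[OF s(1) t(1) gz Gcw Npos[unfolded Nn_def]])
    finally show ?thesis
      unfolding zw c_def C0_def Nn_def[symmetric] L_def \<theta>_def by (simp add: z_def x_def field_simps)
  qed
  define T where "T = (\<lambda>m. exp (\<i> * of_real (\<theta> * \<beta>)) * of_real (Rm s t \<rho> m / C0))"
  have Tint: "has_bochner_integral lborel (\<lambda>y. P (m, y)) (T m)" for m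
  proof -
    have "has_bochner_integral lborel (\<lambda>y. of_real (c m) * (of_real ((cmod (Gamma (Complex (r m) (y - \<beta>))))\<^sup>2) * exp (\<i> * of_real (\<theta> * y))))
           (of_real (c m) * (exp (\<i> * of_real (\<theta> * \<beta>)) * of_real (2 * pi * Gamma (2 * r m) * hh (r m) (- \<theta>))))"
      by (rule has_bochner_integral_mult_right, rule SHIFT[OF rpos])
    then show ?thesis
    proof (elim hbi_eq)
      show "of_real (c m) * (exp (\<i> * of_real (\<theta> * \<beta>)) * of_real (2 * pi * Gamma (2 * r m) * hh (r m) (- \<theta>))) = T m"
        unfolding T_def c_def Rm_def x_def r_def \<theta>_def L_def using C0pos
        by (simp add: field_simps)
    qed (simp add: Ppt)
  qed
  define s' where "s' = sqrt (s * t)"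
  have s': "0 < s'" "s' < 1"
  proof -
    show "0 < s'" unfolding s'_def using s t by simp
    have "s * t < 1 * 1" using s t by (intro mult_strict_mono) auto
    then show "s' < 1" unfolding s'_def by simp
  qed
  have Ls': "ln s' + ln s' = L" unfolding s'_def L_def using s t by (simp add: ln_sqrt ln_mult)
  define U where "U = (\<lambda>m. Rm s' s' \<rho> m / C0)"
  have Uint: "has_bochner_integral lborel (\<lambda>y. norm (P (m, y))) (U m)" for m
  proof -
    have "has_bochner_integral lborel (\<lambda>y. c m * (cmod (Gamma (Complex (r m) (y - \<beta>))))\<^sup>2)
           (c m * (2 * pi * Gamma (2 * r m) * hh (r m) 0))"
      by (rule has_bochner_integral_mult_right, rule SHIFTn[OF rpos])
    then show ?thesis
    proof (elim hbi_eq)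
      fix y show "c m * (cmod (Gamma (Complex (r m) (y - \<beta>))))\<^sup>2 = norm (P (m, y))"
        unfolding Ppt using cpos[of m] by (simp add: norm_mult norm_power)
    next
      show "c m * (2 * pi * Gamma (2 * r m) * hh (r m) 0) = U m"
        unfolding U_def c_def Rm_def x_def r_def Ls' using C0pos by (simp add: field_simps)
    qed
  qed
  have Usum: "summable U"
    unfolding U_def by (intro summable_divide sums_summable[OF RSUM[OF s' s' \<rho>]])
  have Unn: "U m \<ge> 0" for m
  proof -
    have "U m = (\<integral>y. norm (P (m, y)) \<partial>lborel)" using Uint[of m] by (simp add: has_bochner_integral_integral_eq)
    moreover have "(\<integral>y. norm (P (m, y)) \<partial>lborel) \<ge> 0" by (rule integral_nonneg_AE) auto
    ultimately show ?thesis by simp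
  qed
  have intP: "integrable M P"
    unfolding M_def
  proof (rule PS.Fubini_integrable)
    show "P \<in> borel_measurable (count_space UNIV \<Otimes>\<^sub>M lborel)" using Pmeas unfolding M_def .
    have "(\<lambda>m. \<integral>y. norm (P (m, y)) \<partial>lborel) = U"
      using Uint by (auto simp: fun_eq_iff has_bochner_integral_integral_eq)
    then show "integrable (count_space UNIV) (\<lambda>m. \<integral>y. norm (P (m, y)) \<partial>lborel)"
      using Usum Unn by (simp add: integrable_count_space_nat_iff)
    show "AE m in count_space UNIV. integrable lborel (\<lambda>y. P (m, y))"
      using Tint by (auto intro: integrable.intros)
  qed
  have step2: "integral\<^sup>L M P = (\<Sum>m. T m)"
  proof -
    have "integral\<^sup>L M P = (\<integral>m. (\<integral>y. P (m, y) \<partial>lborel) \<partial>count_space UNIV)"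
      using PS.integral_fst'[OF intP[unfolded M_def]] unfolding M_def by simp
    also have "(\<lambda>m. \<integral>y. P (m, y) \<partial>lborel) = T"
      using Tint by (auto simp: fun_eq_iff has_bochner_integral_integral_eq)
    also have "integral\<^sup>L (count_space UNIV) T = (\<Sum>m. T m)"
    proof (rule integral_count_space_nat)
      have "integrable (count_space UNIV) (\<lambda>m. \<integral>y. P (m, y) \<partial>lborel)"
        by (rule PS.integrable_fst'[OF intP[unfolded M_def]])
      also have "(\<lambda>m. \<integral>y. P (m, y) \<partial>lborel) = T"
        using Tint by (auto simp: fun_eq_iff has_bochner_integral_integral_eq)
      finally show "integrable (count_space UNIV) T" .
    qed
    finally show ?thesis .
  qed
  define V where "V = exp (\<rho> * (ln s + ln t)) * Gamma (2 * \<rho> + 1) * exp (- (2 * \<rho> + 1) * ln (s + t - s * t))"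
  have Tsum: "T sums (exp (\<i> * of_real (\<theta> * \<beta>)) * of_real (V / C0))"
    unfolding T_def V_def
    by (intro sums_mult sums_of_real sums_divide RSUM[OF s t \<rho>])
  have final: "exp (\<i> * of_real (\<theta> * \<beta>)) * of_real (V / C0) =
        rpow s w * rpow t (cnj w) / of_real ((s + t - s * t) powr (2 * Re w + 1))"
  proof -
    have st: "s * t < s + t"
    proof -
      have "s * t < s * 1" using s t by (intro mult_strict_left_mono) auto
      then show ?thesis using t by simp
    qed
    then have d: "s + t - s * t > 0" by simp
    have VC: "V / C0 = exp (\<rho> * (ln s + ln t)) * exp (- (2 * \<rho> + 1) * ln (s + t - s * t))"
      unfolding V_def C0 using Gb by simp
    have pw: "(s + t - s * t) powr (2 * Re w + 1) = exp ((2 * \<rho> + 1) * ln (s + t - s * t))"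
      using d by (simp add: powr_def \<rho>_def)
    have rw: "rpow s w * rpow t (cnj w) = of_real (exp (\<rho> * (ln s + ln t))) * exp (\<i> * of_real (\<theta> * \<beta>))"
    proof -
      have "rpow s w * rpow t (cnj w) = exp (w * of_real (ln s) + cnj w * of_real (ln t))"
        unfolding rpow_def by (simp add: exp_add)
      also have "w * of_real (ln s) + cnj w * of_real (ln t) = of_real (\<rho> * (ln s + ln t)) + \<i> * of_real (\<theta> * \<beta>)"
        by (simp add: complex_eq_iff algebra_simps \<rho>_def \<beta>_def \<theta>_def)
      finally show ?thesis by (simp only: exp_add exp_of_real)
    qed
    have em: "exp (- (2 * \<rho> + 1) * ln (s + t - s * t)) = 1 / exp ((2 * \<rho> + 1) * ln (s + t - s * t))"
      by (simp only: mult_minus_left exp_minus inverse_eq_divide)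
    show ?thesis unfolding rw pw VC em
      by (simp add: field_simps)
  qed
  have "L2_inner newton_mu (T_pow s k) (T_pow t k) = exp (\<i> * of_real (\<theta> * \<beta>)) * of_real (V / C0)"
    using step1 step2 sums_unique[OF Tsum] by simp
  then show ?thesis unfolding final k_def .
qed


end
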